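(* Let $F$ be a field of characteristic different from $2$ and $3$ such that $F^2=F$. Let $K_{10}=F\cdot 1\oplus(K_3\otimes K_3)$ be the Kac Jordan superalgebra in the realization described in the context, let $W=(K_3)_{\bar 1}$ and let $V=W\otimes W\subseteq (K_{10})_{\bar 0}$ with the symmetric bilinear form $b(s\otimes t,u\otimes v)=(s|u)(t|v)$. Let $\Psi\colon \mathrm{Aut}(K_{10})\to O(V,b)$, $\varphi\mapsto\varphi|_V$. Then $\Psi$ is surjective and $\ker\Psi=\{\mathrm{id},\tau\}$, where $\tau$ is the grading automorphism, $\tau(z)=(-1)^{\bar z}z$ for homogeneous $z\in K_{10}$.
   Context: The Kaplansky superalgebra $K_3$ has even part $Fe$ and odd part $W=Fx+Fy$, with products $e^2=e$, $e x=xe=\tfrac12 x$, $e y=ye=\tfrac12 y$, $xy=e$, $yx=-e$, $x^2=y^2=0$. It carries the supersymmetric bilinear form with $(e|e)=\tfrac12$, $(x|y)=1$, $(y|x)=-1$, $(x|x)=(y|y)=0$, and even and odd parts orthogonal. $K_{10}=F\cdot 1\oplus(K_3\otimes K_3)$ is the superalgebra in which $1$ is an even identity element, $a\otimes b$ (for homogeneous $a,b\in K_3$) has parity $\bar a+\bar b$, and $(a\otimes b)(c\otimes d)=(-1)^{\bar b\bar c}\bigl(ac\otimes bd-\tfrac34(a|c)(b|d)1\bigr)$ for homogeneous $a,b,c,d\in K_3$; this is (isomorphic to) the $10$-dimensional Kac Jordan superalgebra. $\mathrm{Aut}(K_{10})$ denotes the group of automorphisms of graded algebras (grading-preserving algebra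 automorphisms); each such automorphism leaves $V$ invariant and restricts to an isometry of $(V,b)$, so $\Psi$ is a group homomorphism. $O(V,b)$ is the orthogonal group of $(V,b)$. *)

theory Defs
  imports Main
begin

datatype k3b = E | X | Y

lemma UNIV_k3b: "(UNIV :: k3b set) = {E, X, Y}"
  using k3b.exhaust by auto

instance k3b :: finite
  by standard (simp add: UNIV_k3b)

definition k3odd :: "k3b \<Rightarrow> bool" where
  "k3odd a \<longleftrightarrow> a \<noteq> E"

text \<open>Product of basis elements of K3, as a coordinate vector w.r.t. (e,x,y).\<close>
fun k3mul :: "k3b \<Rightarrow> k3b \<Rightarrow> k3b \<Rightarrow> 'a::field" where
  "k3mul E E = (\<lambda>k. if k = E then 1 else 0)"
| "k3mul E X = (\<lambda>k. if k = X then 1/2 else 0)"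
| "k3mul X E = (\<lambda>k. if k = X then 1/2 else 0)"
| "k3mul E Y = (\<lambda>k. if k = Y then 1/2 else 0)"
| "k3mul Y E = (\<lambda>k. if k = Y then 1/2 else 0)"
| "k3mul X Y = (\<lambda>k. if k = E then 1 else 0)"
| "k3mul Y X = (\<lambda>k. if k = E then -1 else 0)"
| "k3mul X X = (\<lambda>k. 0)"
| "k3mul Y Y = (\<lambda>k. 0)"

fun k3form :: "k3b \<Rightarrow> k3b \<Rightarrow> 'a::field" where
  "k3form E E = 1/2"
| "k3form X Y = 1"
| "k3form Y X = -1"
| "k3form _ _ = 0"

text \<open>Basis of K10: the identity and the tensors of basis elements of K3.\<close>
datatype k10b = Unit | Ten k3b k3b

lemma UNIV_k10b: "(UNIV :: k10b set) = insert Unit (range (\<lambda>(a,b). Ten a b))"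
proof -
  have "i \<in> insert Unit (range (\<lambda>(a,b). Ten a b))" for i
    by (cases i) (auto simp: image_iff)
  then show ?thesis by auto
qed

instance k10b :: finite
  by standard (simp add: UNIV_k10b)

type_synonym 'a k10 = "k10b \<Rightarrow> 'a"

definition k10odd :: "k10b \<Rightarrow> bool" where
  "k10odd i = (case i of Unit \<Rightarrow> False | Ten a b \<Rightarrow> k3odd a \<noteq> k3odd b)"

definition basisvec :: "k10b \<Rightarrow> 'a::field k10" where
  "basisvec i = (\<lambda>k. if k = i then 1 else 0)"

text \<open>Product of basis elements of K10:
  (a(x)b)(c(x)d) = (-1)^(|b||c|) (ac (x) bd - 3/4 (a|c)(b|d) 1).\<close>
fun k10bmul :: "k10b \<Rightarrow> k10b \<Rightarrow> 'a::field k10" where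
  "k10bmul Unit j = basisvec j"
| "k10bmul (Ten a b) Unit = basisvec (Ten a b)"
| "k10bmul (Ten a b) (Ten c d) =
     (\<lambda>k. (if k3odd b \<and> k3odd c then -1 else 1) *
          (case k of
             Unit \<Rightarrow> - (3/4) * k3form a c * k3form b d
           | Ten p q \<Rightarrow> k3mul a c p * k3mul b d q))"

definition k10mul :: "'a::field k10 \<Rightarrow> 'a k10 \<Rightarrow> 'a k10" where
  "k10mul u v = (\<lambda>k. \<Sum>i\<in>UNIV. \<Sum>j\<in>UNIV. u i * v j * k10bmul i j k)"

definition k10add :: "'a::field k10 \<Rightarrow> 'a k10 \<Rightarrow> 'a k10" where
  "k10add u v = (\<lambda>k. u k + v k)"

definition k10smul :: "'a::field \<Rightarrow> 'a k10 \<Rightarrow> 'a k10" where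
  "k10smul c u = (\<lambda>k. c * u k)"

definition k10even_part :: "'a::field k10 set" where
  "k10even_part = {u. \<forall>i. k10odd i \<longrightarrow> u i = 0}"

definition k10odd_part :: "'a::field k10 set" where
  "k10odd_part = {u. \<forall>i. \<not> k10odd i \<longrightarrow> u i = 0}"

definition AutK10 :: "('a::field k10 \<Rightarrow> 'a k10) set" where
  "AutK10 = {\<phi>.
      (\<forall>u v. \<phi> (k10add u v) = k10add (\<phi> u) (\<phi> v))
    \<and> (\<forall>c u. \<phi> (k10smul c u) = k10smul c (\<phi> u))
    \<and> bij \<phi>
    \<and> (\<forall>u v. \<phi> (k10mul u v) = k10mul (\<phi> u) (\<phi> v))
    \<and> \<phi> ` k10even_part \<subseteq> k10even_part
    \<and> \<phi> ` k10odd_part \<subseteq> k10odd_part}"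

definition Vb :: "k10b set" where
  "Vb = {Ten s t | s t. k3odd s \<and> k3odd t}"

definition Vspace :: "'a::field k10 set" where
  "Vspace = {u. \<forall>i. i \<notin> Vb \<longrightarrow> u i = 0}"

definition bV :: "'a::field k10 \<Rightarrow> 'a k10 \<Rightarrow> 'a" where
  "bV u v = (\<Sum>s\<in>{X,Y}. \<Sum>t\<in>{X,Y}. \<Sum>p\<in>{X,Y}. \<Sum>q\<in>{X,Y}.
               u (Ten s t) * v (Ten p q) * k3form s p * k3form t q)"

text \<open>The orthogonal group O(V,b), represented by maps whose behaviour on V
  is a linear bijective isometry of V (only the restriction to V matters).\<close>
definition OVb :: "('a::field k10 \<Rightarrow> 'a k10) set" where
  "OVb = {g.
      (\<forall>u\<in>Vspace. \<forall>v\<in>Vspace. g (k10add u v) = k10add (g u) (g v))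
    \<and> (\<forall>c. \<forall>u\<in>Vspace. g (k10smul c u) = k10smul c (g u))
    \<and> bij_betw g Vspace Vspace
    \<and> (\<forall>u\<in>Vspace. \<forall>v\<in>Vspace. bV (g u) (g v) = bV u v)}"

definition tauK10 :: "'a::field k10 \<Rightarrow> 'a k10" where
  "tauK10 u = (\<lambda>i. if k10odd i then - u i else u i)"

end

theory Submission
  imports Defs
begin
lemma sum_k3b: "(\<Sum>x\<in>(UNIV::k3b set). f x) = f E + f X + f Y"
  by (simp add: UNIV_k3b add.assoc)

lemma UNIV_k10b': "(UNIV::k10b set) = {Unit, Ten E E, Ten E X, Ten E Y, Ten X E, Ten X X, Ten X Y, Ten Y E, Ten Y X, Ten Y Y}"
proof -
  have "i \<in> {Unit, Ten E E, Ten E X, Ten E Y, Ten X E, Ten X X, Ten X Y, Ten Y E, Ten Y X, Ten Y Y}" for i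
    apply (cases i) apply simp
    subgoal for a b by (cases a; cases b; simp)
    done
  then show ?thesis by (rule UNIV_eq_I)
qed

lemma sum_k10b: "(\<Sum>i\<in>(UNIV::k10b set). f i) = f Unit +
  (f (Ten E E) + f (Ten E X) + f (Ten E Y)) + (f (Ten X E) + f (Ten X X) + f (Ten X Y)) +
  (f (Ten Y E) + f (Ten Y X) + f (Ten Y Y))"
  by (simp add: UNIV_k10b' add.assoc)

lemma sum_k10_split: "(\<Sum>i\<in>(UNIV::k10b set). f i) = f Unit + (\<Sum>p\<in>UNIV. \<Sum>q\<in>UNIV. f (Ten p q))"
  by (simp add: sum_k10b sum_k3b add.assoc)

definition linmap :: "(k10b \<Rightarrow> 'a k10) \<Rightarrow> 'a::field k10 \<Rightarrow> 'a k10" where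
  "linmap Phi u = (\<lambda>k. \<Sum>i\<in>UNIV. u i * Phi i k)"

lemma linmap_mult:
  assumes "\<And>i j. linmap Phi (k10bmul i j) = k10mul (Phi i) (Phi j)"
  shows "linmap Phi (k10mul u v) = k10mul (linmap Phi u) (linmap Phi v)"
proof
  fix k
  have "linmap Phi (k10mul u v) k = (\<Sum>l\<in>UNIV. (\<Sum>i\<in>UNIV. \<Sum>j\<in>UNIV. u i * v j * k10bmul i j l) * Phi l k)"
    by (simp add: linmap_def k10mul_def)
  also have "\<dots> = (\<Sum>l\<in>UNIV. \<Sum>i\<in>UNIV. \<Sum>j\<in>UNIV. u i * v j * (k10bmul i j l * Phi l k))"
    by (simp add: sum_distrib_right mult.assoc)
  also have "\<dots> = (\<Sum>i\<in>UNIV. \<Sum>l\<in>UNIV. \<Sum>j\<in>UNIV. u i * v j * (k10bmul i j l * Phi l k))"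
    by (rule sum.swap)
  also have "\<dots> = (\<Sum>i\<in>UNIV. \<Sum>j\<in>UNIV. \<Sum>l\<in>UNIV. u i * v j * (k10bmul i j l * Phi l k))"
    by (rule sum.cong[OF refl], rule sum.swap)
  also have "\<dots> = (\<Sum>i\<in>UNIV. \<Sum>j\<in>UNIV. u i * v j * linmap Phi (k10bmul i j) k)"
    by (simp add: linmap_def sum_distrib_left mult_ac)
  also have "\<dots> = (\<Sum>i\<in>UNIV. \<Sum>j\<in>UNIV. u i * v j * (\<Sum>i'\<in>UNIV. \<Sum>j'\<in>UNIV. Phi i i' * Phi j j' * k10bmul i' j' k))"
    by (simp add: assms k10mul_def)
  also have "\<dots> = (\<Sum>i\<in>UNIV. \<Sum>j\<in>UNIV. \<Sum>i'\<in>UNIV. \<Sum>j'\<in>UNIV. u i * v j * (Phi i i' * Phi j j' * k10bmul i' j' k))"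
    by (simp add: sum_distrib_left)
  also have "\<dots> = (\<Sum>i\<in>UNIV. \<Sum>i'\<in>UNIV. \<Sum>j\<in>UNIV. \<Sum>j'\<in>UNIV. u i * v j * (Phi i i' * Phi j j' * k10bmul i' j' k))"
    by (rule sum.cong[OF refl], rule sum.swap)
  also have "\<dots> = (\<Sum>i'\<in>UNIV. \<Sum>i\<in>UNIV. \<Sum>j\<in>UNIV. \<Sum>j'\<in>UNIV. u i * v j * (Phi i i' * Phi j j' * k10bmul i' j' k))"
    by (rule sum.swap)
  also have "\<dots> = (\<Sum>i'\<in>UNIV. \<Sum>i\<in>UNIV. \<Sum>j'\<in>UNIV. \<Sum>j\<in>UNIV. u i * v j * (Phi i i' * Phi j j' * k10bmul i' j' k))"
    by (rule sum.cong[OF refl], rule sum.cong[OF refl], rule sum.swap)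
  also have "\<dots> = (\<Sum>i'\<in>UNIV. \<Sum>j'\<in>UNIV. \<Sum>i\<in>UNIV. \<Sum>j\<in>UNIV. u i * v j * (Phi i i' * Phi j j' * k10bmul i' j' k))"
    by (rule sum.cong[OF refl], rule sum.swap)
  also have "\<dots> = (\<Sum>i'\<in>UNIV. \<Sum>j'\<in>UNIV. \<Sum>j\<in>UNIV. \<Sum>i\<in>UNIV. u i * v j * (Phi i i' * Phi j j' * k10bmul i' j' k))"
    by (rule sum.cong[OF refl], rule sum.cong[OF refl], rule sum.swap)
  also have "\<dots> = k10mul (linmap Phi u) (linmap Phi v) k"
    by (simp add: k10mul_def linmap_def sum_distrib_left sum_distrib_right mult_ac)
  finally show "linmap Phi (k10mul u v) k = k10mul (linmap Phi u) (linmap Phi v) k" .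
qed

lemma linmap_add: "linmap Phi (k10add u v) = k10add (linmap Phi u) (linmap Phi v)"
  by (simp add: linmap_def k10add_def distrib_right sum.distrib)

lemma linmap_smul: "linmap Phi (k10smul c u) = k10smul c (linmap Phi u)"
  by (simp add: linmap_def k10smul_def sum_distrib_left mult.assoc)

lemma linmap_comp: "linmap Psi (linmap Phi u) = linmap (\<lambda>i. linmap Psi (Phi i)) u"
proof
  fix k
  have "linmap Psi (linmap Phi u) k = (\<Sum>j\<in>UNIV. \<Sum>i\<in>UNIV. u i * (Phi i j * Psi j k))"
    by (simp add: linmap_def sum_distrib_right mult.assoc)
  also have "\<dots> = (\<Sum>i\<in>UNIV. \<Sum>j\<in>UNIV. u i * (Phi i j * Psi j k))"
    by (rule sum.swap)
  also have "\<dots> = linmap (\<lambda>i. linmap Psi (Phi i)) u k"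
    by (simp add: linmap_def sum_distrib_left)
  finally show "linmap Psi (linmap Phi u) k = linmap (\<lambda>i. linmap Psi (Phi i)) u k" .
qed

lemma linmap_basisvec: "linmap basisvec u = u"
proof
  fix k
  have "\<And>i. u i * basisvec i k = (if k = i then u k else 0)" by (simp add: basisvec_def)
  then show "linmap basisvec u k = u k" by (simp add: linmap_def)
qed

lemma linmap_id:
  assumes "\<And>i. Phi i = basisvec i"
  shows "linmap Phi u = u"
proof -
  have "Phi = basisvec" using assms by auto
  then show ?thesis by (simp add: linmap_basisvec)
qed

lemma linmap_inverse:
  assumes "\<And>i. linmap Psi (Phi i) = basisvec i"
  shows "linmap Psi (linmap Phi u) = u"
  by (simp add: linmap_comp assms linmap_id)

lemma linmap_Aut:
  assumes mult: "\<And>i j. linmap Phi (k10bmul i j) = k10mul (Phi i) (Phi j)"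
    and inv1: "\<And>i. linmap Psi (Phi i) = basisvec i"
    and inv2: "\<And>i. linmap Phi (Psi i) = basisvec i"
    and par: "\<And>i k. Phi i k \<noteq> 0 \<Longrightarrow> k10odd i = k10odd k"
  shows "linmap Phi \<in> AutK10"
proof -
  have b: "bij (linmap Phi)"
    by (rule o_bij[where g="linmap Psi"]) (auto simp: linmap_inverse inv1 inv2)
  have ev: "linmap Phi ` k10even_part \<subseteq> k10even_part"
  proof
    fix w assume "w \<in> linmap Phi ` k10even_part"
    then obtain u where u: "u \<in> k10even_part" "w = linmap Phi u" by auto
    have "w k = 0" if "k10odd k" for k
    proof -
      have "u i * Phi i k = 0" for i
      proof (cases "k10odd i")
        case True then show ?thesis using u(1) by (simp add: k10even_part_def)
      next
        case False then have "Phi i k = 0" using par[of i k] that by auto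
        then show ?thesis by simp
      qed
      then have "(\<Sum>i\<in>UNIV. u i * Phi i k) = 0" by (intro sum.neutral) auto
      then show ?thesis using u(2) by (simp add: linmap_def)
    qed
    then show "w \<in> k10even_part" by (simp add: k10even_part_def)
  qed
  have od: "linmap Phi ` k10odd_part \<subseteq> k10odd_part"
  proof
    fix w assume "w \<in> linmap Phi ` k10odd_part"
    then obtain u where u: "u \<in> k10odd_part" "w = linmap Phi u" by auto
    have "w k = 0" if "\<not> k10odd k" for k
    proof -
      have "u i * Phi i k = 0" for i
      proof (cases "k10odd i")
        case False then show ?thesis using u(1) by (simp add: k10odd_part_def)
      next
        case True then have "Phi i k = 0" using par[of i k] that by auto
        then show ?thesis by simp
      qed
      then have "(\<Sum>i\<in>UNIV. u i * Phi i k) = 0" by (intro sum.neutral) auto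
      then show ?thesis using u(2) by (simp add: linmap_def)
    qed
    then show "w \<in> k10odd_part" by (simp add: k10odd_part_def)
  qed
  show ?thesis unfolding AutK10_def
    using b ev od by (auto simp: linmap_add linmap_smul linmap_mult mult)
qed

lemma linmap_bv: "linmap Phi (basisvec j) = Phi j"
proof
  fix k
  have "\<And>i. basisvec j i * Phi i k = (if i = j then Phi j k else 0)" by (simp add: basisvec_def)
  then show "linmap Phi (basisvec j) k = Phi j k" by (simp add: linmap_def)
qed

lemma k10bmul_Unit_right: "k10bmul i Unit = basisvec i"
  by (cases i) auto

lemma mul_unit_left: "k10mul (basisvec Unit) u = u"
proof
  fix k
  have "\<And>i j. basisvec Unit i * u j * k10bmul i j k = (if i = Unit then u j * basisvec j k else 0)"
    by (simp add: basisvec_def)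
  have "k10mul (basisvec Unit) u k = (\<Sum>j\<in>UNIV. u j * basisvec j k)"
    by (simp add: k10mul_def sum_k10_split basisvec_def)
  also have "\<dots> = u k" using linmap_basisvec[of u] by (simp add: linmap_def fun_eq_iff)
  finally show "k10mul (basisvec Unit) u k = u k" .
qed

lemma mul_unit_right: "k10mul u (basisvec Unit) = u"
proof
  fix k
  have "\<And>i j. u i * basisvec Unit j * k10bmul i j k = (if j = Unit then u i * basisvec i k else 0)"
    by (simp add: basisvec_def k10bmul_Unit_right)
  then have "k10mul u (basisvec Unit) k = (\<Sum>i\<in>UNIV. u i * basisvec i k)"
    by (simp add: k10mul_def)
  also have "\<dots> = u k" using linmap_basisvec[of u] by (simp add: linmap_def fun_eq_iff)
  finally show "k10mul u (basisvec Unit) k = u k" .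
qed

definition PhiT :: "(k3b \<Rightarrow> k3b \<Rightarrow> 'a) \<Rightarrow> (k3b \<Rightarrow> k3b \<Rightarrow> 'a) \<Rightarrow> k10b \<Rightarrow> 'a::field k10" where
 "PhiT al be i = (case i of Unit \<Rightarrow> basisvec Unit | Ten a b \<Rightarrow>
     (\<lambda>k. case k of Unit \<Rightarrow> 0 | Ten p q \<Rightarrow> al a p * be b q))"

definition k3good :: "(k3b \<Rightarrow> k3b \<Rightarrow> 'a::field) \<Rightarrow> bool" where
 "k3good al \<longleftrightarrow> (\<forall>a p. al a p \<noteq> 0 \<longrightarrow> k3odd a = k3odd p)
   \<and> (\<forall>a c q. (\<Sum>r\<in>UNIV. k3mul a c r * al r q) = (\<Sum>p\<in>UNIV. \<Sum>p'\<in>UNIV. al a p * al c p' * k3mul p p' q))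
   \<and> (\<forall>a c. (\<Sum>p\<in>UNIV. \<Sum>p'\<in>UNIV. al a p * al c p' * k3form p p') = k3form a c)"

lemma sum4_prod:
  "(\<Sum>p\<in>(UNIV::k3b set). \<Sum>q\<in>(UNIV::k3b set). \<Sum>p'\<in>(UNIV::k3b set). \<Sum>q'\<in>(UNIV::k3b set). (F p p' * G q q' :: 'a::field))
   = (\<Sum>p\<in>UNIV. \<Sum>p'\<in>UNIV. F p p') * (\<Sum>q\<in>UNIV. \<Sum>q'\<in>UNIV. G q q')"
  by (simp add: sum_k3b algebra_simps)

lemma PhiT_mult_TT:
  assumes ga: "k3good al" and gb: "k3good be"
  shows "linmap (PhiT al be) (k10bmul (Ten a b) (Ten c d)) = k10mul (PhiT al be (Ten a b)) (PhiT al be (Ten c d))"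
proof
  fix k
  define s :: 'a where "s = (if k3odd b \<and> k3odd c then -1 else 1)"
  have parA: "\<And>a p. al a p \<noteq> 0 \<Longrightarrow> k3odd a = k3odd p" using ga by (simp add: k3good_def)
  have parB: "\<And>a p. be a p \<noteq> 0 \<Longrightarrow> k3odd a = k3odd p" using gb by (simp add: k3good_def)
  have mulA: "\<And>a c q. (\<Sum>r\<in>UNIV. k3mul a c r * al r q) = (\<Sum>p\<in>UNIV. \<Sum>p'\<in>UNIV. al a p * al c p' * k3mul p p' q)"
    using ga by (simp add: k3good_def)
  have mulB: "\<And>a c q. (\<Sum>r\<in>UNIV. k3mul a c r * be r q) = (\<Sum>p\<in>UNIV. \<Sum>p'\<in>UNIV. be a p * be c p' * k3mul p p' q)"
    using gb by (simp add: k3good_def)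
  have frA: "\<And>a c. (\<Sum>p\<in>UNIV. \<Sum>p'\<in>UNIV. al a p * al c p' * k3form p p') = k3form a c"
    using ga by (simp add: k3good_def)
  have frB: "\<And>a c. (\<Sum>p\<in>UNIV. \<Sum>p'\<in>UNIV. be a p * be c p' * k3form p p') = k3form a c"
    using gb by (simp add: k3good_def)
  have sg: "be b q * al c p' * (if k3odd q \<and> k3odd p' then -1 else 1) = be b q * al c p' * s" for q p'
  proof (cases "be b q = 0 \<or> al c p' = 0")
    case True then show ?thesis by auto
  next
    case False then have "k3odd b = k3odd q" "k3odd c = k3odd p'" using parA parB by auto
    then show ?thesis by (simp add: s_def)
  qed
  have R: "k10mul (PhiT al be (Ten a b)) (PhiT al be (Ten c d)) k =
     (\<Sum>p\<in>UNIV. \<Sum>q\<in>UNIV. \<Sum>p'\<in>UNIV. \<Sum>q'\<in>UNIV. al a p * be b q * (al c p' * be d q') * k10bmul (Ten p q) (Ten p' q') k)"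
    by (simp add: k10mul_def sum_k10_split PhiT_def sum_distrib_left sum_distrib_right)
  have L: "linmap (PhiT al be) (k10bmul (Ten a b) (Ten c d)) k =
      s * (-(3/4) * k3form a c * k3form b d) * basisvec Unit k +
      (\<Sum>r\<in>UNIV. \<Sum>t\<in>UNIV. s * (k3mul a c r * k3mul b d t) * (case k of Unit \<Rightarrow> 0 | Ten p q \<Rightarrow> al r p * be t q))"
    by (simp add: linmap_def sum_k10_split PhiT_def s_def)
  show "linmap (PhiT al be) (k10bmul (Ten a b) (Ten c d)) k = k10mul (PhiT al be (Ten a b)) (PhiT al be (Ten c d)) k"
  proof (cases k)
    case Unit
    have "(\<Sum>p\<in>UNIV. \<Sum>q\<in>UNIV. \<Sum>p'\<in>UNIV. \<Sum>q'\<in>UNIV. al a p * be b q * (al c p' * be d q') * k10bmul (Ten p q) (Ten p' q') k)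
       = (\<Sum>p\<in>UNIV. \<Sum>q\<in>UNIV. \<Sum>p'\<in>UNIV. \<Sum>q'\<in>UNIV. (s * (-(3/4))) * ((al a p * al c p' * k3form p p') * (be b q * be d q' * k3form q q')))"
    proof (intro sum.cong refl)
      fix p q p' q'
      have "al a p * be b q * (al c p' * be d q') * k10bmul (Ten p q) (Ten p' q') k
          = al a p * be d q' * (-(3/4) * k3form p p' * k3form q q') * (be b q * al c p' * (if k3odd q \<and> k3odd p' then -1 else 1))"
        using Unit by (simp add: mult_ac)
      also have "\<dots> = (s * (-(3/4))) * ((al a p * al c p' * k3form p p') * (be b q * be d q' * k3form q q'))"
        by (simp only: sg) (simp add: mult_ac)
      finally show "al a p * be b q * (al c p' * be d q') * k10bmul (Ten p q) (Ten p' q') k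
          = (s * (-(3/4))) * ((al a p * al c p' * k3form p p') * (be b q * be d q' * k3form q q'))" .
    qed
    also have "\<dots> = (s * (-(3/4))) * (\<Sum>p\<in>UNIV. \<Sum>q\<in>UNIV. \<Sum>p'\<in>UNIV. \<Sum>q'\<in>UNIV. ((al a p * al c p' * k3form p p') * (be b q * be d q' * k3form q q')))"
      by (simp add: sum_distrib_left)
    also have "\<dots> = (s * (-(3/4))) * ((\<Sum>p\<in>UNIV. \<Sum>p'\<in>UNIV. al a p * al c p' * k3form p p') * (\<Sum>q\<in>UNIV. \<Sum>q'\<in>UNIV. be b q * be d q' * k3form q q'))"
      by (simp only: sum4_prod)
    also have "\<dots> = s * (-(3/4) * k3form a c * k3form b d)"
      by (simp only: frA frB) (simp only: mult_ac)
    finally show ?thesis using L R Unit by (simp add: basisvec_def)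
  next
    case (Ten r t)
    have "(\<Sum>p\<in>UNIV. \<Sum>q\<in>UNIV. \<Sum>p'\<in>UNIV. \<Sum>q'\<in>UNIV. al a p * be b q * (al c p' * be d q') * k10bmul (Ten p q) (Ten p' q') k)
       = (\<Sum>p\<in>UNIV. \<Sum>q\<in>UNIV. \<Sum>p'\<in>UNIV. \<Sum>q'\<in>UNIV. s * ((al a p * al c p' * k3mul p p' r) * (be b q * be d q' * k3mul q q' t)))"
    proof (intro sum.cong refl)
      fix p q p' q'
      have "al a p * be b q * (al c p' * be d q') * k10bmul (Ten p q) (Ten p' q') k
          = al a p * be d q' * (k3mul p p' r * k3mul q q' t) * (be b q * al c p' * (if k3odd q \<and> k3odd p' then -1 else 1))"
        using Ten by (simp add: mult_ac)
      also have "\<dots> = s * ((al a p * al c p' * k3mul p p' r) * (be b q * be d q' * k3mul q q' t))"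
        by (simp only: sg) (simp add: mult_ac)
      finally show "al a p * be b q * (al c p' * be d q') * k10bmul (Ten p q) (Ten p' q') k
          = s * ((al a p * al c p' * k3mul p p' r) * (be b q * be d q' * k3mul q q' t))" .
    qed
    also have "\<dots> = s * (\<Sum>p\<in>UNIV. \<Sum>q\<in>UNIV. \<Sum>p'\<in>UNIV. \<Sum>q'\<in>UNIV. ((al a p * al c p' * k3mul p p' r) * (be b q * be d q' * k3mul q q' t)))"
      by (simp add: sum_distrib_left)
    also have "\<dots> = s * ((\<Sum>p\<in>UNIV. \<Sum>p'\<in>UNIV. al a p * al c p' * k3mul p p' r) * (\<Sum>q\<in>UNIV. \<Sum>q'\<in>UNIV. be b q * be d q' * k3mul q q' t))"
      by (simp only: sum4_prod)
    also have "\<dots> = s * ((\<Sum>r'\<in>UNIV. k3mul a c r' * al r' r) * (\<Sum>t'\<in>UNIV. k3mul b d t' * be t' t))"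
      by (simp only: mulA mulB)
    also have "\<dots> = (\<Sum>r'\<in>UNIV. \<Sum>t'\<in>UNIV. s * (k3mul a c r' * k3mul b d t') * (al r' r * be t' t))"
      unfolding sum_product by (simp add: sum_distrib_left mult_ac)
    finally show ?thesis using L R Ten by (simp add: basisvec_def)
  qed
qed

lemma PhiT_mult:
  assumes ga: "k3good al" and gb: "k3good be"
  shows "linmap (PhiT al be) (k10bmul i j) = k10mul (PhiT al be i) (PhiT al be j)"
proof (cases i)
  case Unit
  then show ?thesis by (simp add: linmap_bv PhiT_def mul_unit_left)
next
  case (Ten a b)
  show ?thesis
  proof (cases j)
    case Unit
    then show ?thesis using Ten by (simp add: linmap_bv PhiT_def mul_unit_right)
  next
    case (Ten c d)
    then show ?thesis using \<open>i = Ten a b\<close> PhiT_mult_TT[OF ga gb] by simp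
  qed
qed

type_synonym 'a m2 = "'a \<times> 'a \<times> 'a \<times> 'a"

fun ent :: "'a m2 \<Rightarrow> k3b \<Rightarrow> k3b \<Rightarrow> 'a::zero" where
  "ent (a,b,c,d) p q = (if p = X \<and> q = X then a else if p = X \<and> q = Y then b
      else if p = Y \<and> q = X then c else if p = Y \<and> q = Y then d else 0)"

fun det2 :: "'a m2 \<Rightarrow> 'a::comm_ring" where
  "det2 (a,b,c,d) = a * d - b * c"

definition kmat :: "'a m2 \<Rightarrow> k3b \<Rightarrow> k3b \<Rightarrow> 'a::field" where
  "kmat M a p = (if a = E \<and> p = E then 1 else if a = E \<or> p = E then 0 else ent M a p)"

lemma kmat_good:
  assumes "det2 M = (1::'a::field)"
  shows "k3good (kmat M)"
proof -
  obtain m11 m12 m21 m22 where M: "M = (m11,m12,m21,m22)" by (cases M) auto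
  have d: "m11 * m22 - m12 * m21 = 1" using assms M by simp
  have 1: "\<forall>a p. kmat M a p \<noteq> 0 \<longrightarrow> k3odd a = k3odd p"
    by (auto simp: kmat_def k3odd_def)
  have 2: "(\<Sum>r\<in>UNIV. k3mul a c r * kmat M r q) = (\<Sum>p\<in>UNIV. \<Sum>p'\<in>UNIV. kmat M a p * kmat M c p' * k3mul p p' q)" for a c q
    using d apply (cases a; cases c; cases q)
    apply (simp_all add: sum_k3b kmat_def M)
    apply (simp_all add: algebra_simps)
    done
  have 3: "(\<Sum>p\<in>UNIV. \<Sum>p'\<in>UNIV. kmat M a p * kmat M c p' * k3form p p') = k3form a c" for a c
    using d apply (cases a; cases c)
    apply (simp_all add: sum_k3b kmat_def M)
    apply (simp_all add: algebra_simps)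
    done
  show ?thesis using 1 2 3 by (simp add: k3good_def)
qed

fun adj2 :: "'a m2 \<Rightarrow> 'a::comm_ring m2" where
  "adj2 (a,b,c,d) = (d, -b, -c, a)"

lemma PhiT_par:
  assumes "k3good al" "k3good be"
  shows "PhiT al be i k \<noteq> 0 \<Longrightarrow> k10odd i = k10odd k"
  using assms
  by (cases i; cases k) (auto simp: PhiT_def basisvec_def k3good_def k10odd_def split: if_splits)

lemma kmat_inv:
  assumes "det2 M = (1::'a::field)" "det2 N = 1"
  shows "linmap (PhiT (kmat (adj2 M)) (kmat (adj2 N))) (PhiT (kmat M) (kmat N) i) = basisvec i"
proof -
  obtain m11 m12 m21 m22 where M: "M = (m11,m12,m21,m22)" by (cases M) auto
  obtain n11 n12 n21 n22 where N: "N = (n11,n12,n21,n22)" by (cases N) auto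
  have d: "m11 * m22 - m12 * m21 = 1" "n11 * n22 - n12 * n21 = 1" using assms M N by auto
  show ?thesis
  proof
    fix k
    show "linmap (PhiT (kmat (adj2 M)) (kmat (adj2 N))) (PhiT (kmat M) (kmat N) i) k = basisvec i k"
      using d
    proof (cases i)
      case Unit then show ?thesis
        by (cases k) (simp_all add: linmap_def sum_k10_split PhiT_def basisvec_def)
    next
      case (Ten a b)
      show ?thesis
      proof (cases k)
        case Unit then show ?thesis using Ten
          by (simp add: linmap_def sum_k10_split PhiT_def basisvec_def)
      next
        case (Ten p q)
        show ?thesis using \<open>i = Ten a b\<close> Ten d
          apply (cases a; cases b; cases p; cases q)
          apply (simp_all add: linmap_def sum_k10_split sum_k3b PhiT_def kmat_def basisvec_def M N)
          apply (simp_all add: algebra_simps)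
          done
      qed
    qed
  qed
qed

lemma det2_adj2: "det2 (adj2 M) = det2 M"
  by (cases M) (simp add: algebra_simps)

lemma adj2_adj2: "adj2 (adj2 M) = (M::'a::comm_ring m2)"
  by (cases M) simp

lemma Lift_Aut:
  assumes "det2 M = (1::'a::field)" "det2 N = 1"
  shows "linmap (PhiT (kmat M) (kmat N)) \<in> AutK10"
proof (rule linmap_Aut[where Psi="PhiT (kmat (adj2 M)) (kmat (adj2 N))"])
  show "linmap (PhiT (kmat M) (kmat N)) (k10bmul i j) = k10mul (PhiT (kmat M) (kmat N) i) (PhiT (kmat M) (kmat N) j)" for i j
    by (rule PhiT_mult) (simp_all add: kmat_good assms)
  show "linmap (PhiT (kmat (adj2 M)) (kmat (adj2 N))) (PhiT (kmat M) (kmat N) i) = basisvec i" for i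
    by (rule kmat_inv) (simp_all add: assms)
  show "linmap (PhiT (kmat M) (kmat N)) (PhiT (kmat (adj2 M)) (kmat (adj2 N)) i) = basisvec i" for i
    using kmat_inv[of "adj2 M" "adj2 N" i] by (simp add: assms det2_adj2 adj2_adj2)
  show "PhiT (kmat M) (kmat N) i k \<noteq> 0 \<Longrightarrow> k10odd i = k10odd k" for i k
    by (rule PhiT_par) (simp_all add: kmat_good assms)
qed

lemma sum_if_const: "(\<Sum>j\<in>A. if P then g j else 0) = (if P then (\<Sum>j\<in>A. g j) else 0)"
  by (cases P) auto

lemma mul_bv_scaled: "k10mul (\<lambda>k. c * basisvec i k) (\<lambda>k. d * basisvec j k) = (\<lambda>k. c * d * k10bmul i j k)"
proof
  fix k
  have "\<And>i' j'. c * basisvec i i' * (d * basisvec j j') * k10bmul i' j' k = (if i' = i then (if j' = j then c * d * k10bmul i j k else 0) else 0)"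
    by (simp add: basisvec_def)
  then show "k10mul (\<lambda>k. c * basisvec i k) (\<lambda>k. d * basisvec j k) k = c * d * k10bmul i j k"
    by (simp add: k10mul_def sum_if_const)
qed

definition sgab :: "k3b \<Rightarrow> k3b \<Rightarrow> 'a::field" where
  "sgab a b = (if k3odd a \<and> k3odd b then -1 else 1)"

definition Phisw :: "k10b \<Rightarrow> 'a::field k10" where
  "Phisw i = (case i of Unit \<Rightarrow> (\<lambda>k. 1 * basisvec Unit k) | Ten a b \<Rightarrow> (\<lambda>k. sgab a b * basisvec (Ten b a) k))"

lemma Phisw_mult: "linmap Phisw (k10bmul i j) = k10mul (Phisw i) (Phisw j)"
proof (cases i)
  case Unit
  then show ?thesis by (simp add: linmap_bv Phisw_def mul_unit_left)
next
  case (Ten a b)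
  show ?thesis
  proof (cases j)
    case Unit
    then show ?thesis using Ten by (simp add: linmap_bv Phisw_def mul_unit_right)
  next
    case (Ten c d)
    have "k10mul (Phisw i) (Phisw j) = (\<lambda>k. sgab a b * sgab c d * (k10bmul (Ten b a) (Ten d c) k :: 'a))"
      using Ten \<open>i = Ten a b\<close> by (simp add: Phisw_def mul_bv_scaled)
    moreover have "linmap Phisw (k10bmul i j) k = sgab a b * sgab c d * (k10bmul (Ten b a) (Ten d c) k :: 'a)" for k
      using Ten \<open>i = Ten a b\<close>
      apply (cases k)
      apply (cases a; cases b; cases c; cases d; simp add: linmap_def sum_k10b Phisw_def sgab_def basisvec_def k3odd_def)
      subgoal for p q
      apply (cases a; cases b; cases c; cases d; cases p; cases q; simp add: linmap_def sum_k10b Phisw_def sgab_def basisvec_def k3odd_def)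
      done
      done
    ultimately show ?thesis by auto
  qed
qed

lemma Phisw_inv: "linmap Phisw (Phisw i) = basisvec i"
proof (cases i)
  case Unit then show ?thesis by (simp add: Phisw_def linmap_bv)
next
  case (Ten a b)
  show ?thesis
  proof
    fix k
    show "linmap Phisw (Phisw i) k = basisvec i k"
      using Ten apply (cases k)
      apply (simp add: linmap_def sum_k10b Phisw_def basisvec_def)
      subgoal for p q
        by (cases a; cases b; cases p; cases q; simp add: linmap_def sum_k10b Phisw_def sgab_def basisvec_def k3odd_def)
      done
  qed
qed

lemma Phisw_Aut: "linmap (Phisw :: k10b \<Rightarrow> 'a::field k10) \<in> AutK10"
proof (rule linmap_Aut[where Psi=Phisw])
  show "Phisw i k \<noteq> 0 \<Longrightarrow> k10odd i = k10odd k" for i k :: k10b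
    by (cases i; cases k) (auto simp: Phisw_def basisvec_def k10odd_def split: if_splits)
qed (simp_all add: Phisw_mult Phisw_inv)

definition Phitau :: "k10b \<Rightarrow> 'a::field k10" where
  "Phitau i = (\<lambda>k. (if k10odd i then -1 else 1) * basisvec i k)"

lemma tau_linmap: "tauK10 = linmap Phitau"
proof (rule ext)+
  fix u :: "'a k10" and k
  have "\<And>i. u i * Phitau i k = (if i = k then (if k10odd k then - u k else u k) else 0)"
    by (simp add: Phitau_def basisvec_def)
  then show "tauK10 u k = linmap Phitau u k" by (simp add: linmap_def tauK10_def)
qed

lemma Phitau_mult: "linmap Phitau (k10bmul i j) = k10mul (Phitau i) (Phitau j)"
proof (cases i)
  case Unit
  then show ?thesis by (simp add: linmap_bv Phitau_def mul_unit_left k10odd_def)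
next
  case (Ten a b)
  show ?thesis
  proof (cases j)
    case Unit
    then show ?thesis using Ten by (simp add: linmap_bv Phitau_def mul_unit_right k10odd_def)
  next
    case (Ten c d)
    have "k10mul (Phitau i) (Phitau j) = (\<lambda>k. (if k10odd i then -1 else 1) * (if k10odd j then -1 else 1) * (k10bmul i j k :: 'a))"
      by (simp add: Phitau_def mul_bv_scaled)
    moreover have "linmap Phitau (k10bmul i j) k = (if k10odd i then -1 else 1) * (if k10odd j then -1 else 1) * (k10bmul i j k :: 'a)" for k
      using Ten \<open>i = Ten a b\<close>
      apply (cases k)
      apply (cases a; cases b; cases c; cases d; simp add: linmap_def sum_k10b Phitau_def basisvec_def k3odd_def k10odd_def)
      subgoal for p q
      apply (cases a; cases b; cases c; cases d; cases p; cases q; simp add: linmap_def sum_k10b Phitau_def basisvec_def k3odd_def k10odd_def)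
      done
      done
    ultimately show ?thesis by auto
  qed
qed

lemma Phitau_inv: "linmap Phitau (Phitau i) = basisvec i"
proof
  fix k
  have "(\<Sum>j\<in>UNIV. Phitau i j * Phitau j k) = (\<Sum>j\<in>UNIV. if j = i then basisvec i k else 0)"
    by (rule sum.cong) (auto simp: Phitau_def basisvec_def)
  then show "linmap Phitau (Phitau i) k = basisvec i k" by (simp add: linmap_def)
qed

lemma tau_Aut: "(tauK10 :: 'a::field k10 \<Rightarrow> 'a k10) \<in> AutK10"
  unfolding tau_linmap
proof (rule linmap_Aut[where Psi=Phitau])
  show "Phitau i k \<noteq> 0 \<Longrightarrow> k10odd i = k10odd k" for i k :: k10b
    by (auto simp: Phitau_def basisvec_def split: if_splits)
qed (simp_all add: Phitau_mult Phitau_inv)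

definition zv :: "'a::field k10" where "zv = (\<lambda>k. 0)"

lemma Aut_props:
  assumes "\<phi> \<in> AutK10"
  shows "\<And>u v. \<phi> (k10add u v) = k10add (\<phi> u) (\<phi> v)"
    and "\<And>c u. \<phi> (k10smul c u) = k10smul c (\<phi> u)"
    and "bij \<phi>"
    and "\<And>u v. \<phi> (k10mul u v) = k10mul (\<phi> u) (\<phi> v)"
    and "\<And>u. u \<in> k10even_part \<Longrightarrow> \<phi> u \<in> k10even_part"
    and "\<And>u. u \<in> k10odd_part \<Longrightarrow> \<phi> u \<in> k10odd_part"
  using assms unfolding AutK10_def by (simp_all add: image_subset_iff)

lemma Aut_zero:
  assumes "\<phi> \<in> AutK10" shows "\<phi> zv = zv"
proof -
  have "zv = k10smul 0 (zv::'a k10)" by (simp add: zv_def k10smul_def)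
  then have "\<phi> zv = k10smul 0 (\<phi> zv)" using Aut_props(2)[OF assms] by metis
  then show ?thesis by (simp add: zv_def k10smul_def)
qed

lemma Aut_linmap:
  assumes "\<phi> \<in> AutK10"
  shows "\<phi> u = linmap (\<lambda>i. \<phi> (basisvec i)) u"
proof -
  have "\<phi> (\<lambda>k. \<Sum>i\<in>S. u i * basisvec i k) = (\<lambda>k. \<Sum>i\<in>S. u i * \<phi> (basisvec i) k)" if "finite S" for S
    using that
  proof (induction S rule: finite_induct)
    case empty
    then show ?case using Aut_zero[OF assms] by (simp add: zv_def)
  next
    case (insert i S)
    have "(\<lambda>k. \<Sum>i\<in>insert i S. u i * basisvec i k) = k10add (k10smul (u i) (basisvec i)) (\<lambda>k. \<Sum>i\<in>S. u i * basisvec i k)"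
      using insert by (simp add: k10add_def k10smul_def)
    then show ?case using insert Aut_props(1,2)[OF assms] by (simp add: k10add_def k10smul_def)
  qed
  from this[of UNIV] have "\<phi> (\<lambda>k. \<Sum>i\<in>UNIV. u i * basisvec i k) = linmap (\<lambda>i. \<phi> (basisvec i)) u"
    by (simp add: linmap_def)
  moreover have "(\<lambda>k. \<Sum>i\<in>UNIV. u i * basisvec i k) = u"
    using linmap_basisvec[of u] by (simp add: linmap_def)
  ultimately show ?thesis by simp
qed

lemma Aut_inj: "\<phi> \<in> AutK10 \<Longrightarrow> \<phi> u = \<phi> v \<Longrightarrow> u = v"
  using Aut_props(3) by (metis bij_def injD)

lemma Aut_one:
  assumes "\<phi> \<in> AutK10" shows "\<phi> (basisvec Unit) = basisvec Unit"
proof -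
  obtain w where w: "\<phi> w = basisvec Unit" using Aut_props(3)[OF assms] by (metis bij_def surjD)
  have "k10mul (\<phi> (basisvec Unit)) (basisvec Unit) = \<phi> (k10mul (basisvec Unit) w)"
    using Aut_props(4)[OF assms] w by simp
  also have "\<dots> = basisvec Unit" using w by (simp add: mul_unit_left)
  finally show ?thesis by (simp add: mul_unit_right)
qed

lemma Aut_inv:
  assumes "\<phi> \<in> AutK10" shows "inv \<phi> \<in> AutK10"
proof -
  note P = Aut_props[OF assms]
  have fi: "\<phi> (inv \<phi> x) = x" for x using P(3) by (simp add: bij_is_surj surj_f_inv_f)
  have if': "inv \<phi> (\<phi> x) = x" for x using P(3) by (simp add: bij_is_inj)
  have 1: "inv \<phi> (k10add u v) = k10add (inv \<phi> u) (inv \<phi> v)" for u v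
    by (metis P(1) fi if')
  have 2: "inv \<phi> (k10smul c u) = k10smul c (inv \<phi> u)" for c u
    by (metis P(2) fi if')
  have 3: "inv \<phi> (k10mul u v) = k10mul (inv \<phi> u) (inv \<phi> v)" for u v
    by (metis P(4) fi if')
  have 4: "bij (inv \<phi>)" using P(3) by (rule bij_imp_bij_inv)
  have evodd: "u \<in> k10even_part" if "\<phi> u \<in> k10even_part" for u
  proof -
    define ue where "ue = (\<lambda>k. if k10odd k then 0 else u k)"
    define uo where "uo = (\<lambda>k. if k10odd k then u k else 0)"
    have ue: "ue \<in> k10even_part" and uo: "uo \<in> k10odd_part"
      by (auto simp: ue_def uo_def k10even_part_def k10odd_part_def)
    have "u = k10add ue uo" by (auto simp: ue_def uo_def k10add_def)
    then have "\<phi> u = k10add (\<phi> ue) (\<phi> uo)" using P(1) by metis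
    then have "\<phi> uo = (\<lambda>k. \<phi> u k - \<phi> ue k)" by (auto simp: k10add_def)
    then have "\<phi> uo \<in> k10even_part" using that P(5)[OF ue] by (auto simp: k10even_part_def)
    moreover have "\<phi> uo \<in> k10odd_part" using P(6)[OF uo] .
    ultimately have "\<phi> uo = zv" by (auto simp: k10even_part_def k10odd_part_def zv_def)
    then have "uo = zv" using Aut_zero[OF assms] Aut_inj[OF assms] by metis
    then show ?thesis by (auto simp: uo_def zv_def k10even_part_def fun_eq_iff split: if_splits)
  qed
  have oddodd: "u \<in> k10odd_part" if "\<phi> u \<in> k10odd_part" for u
  proof -
    define ue where "ue = (\<lambda>k. if k10odd k then 0 else u k)"
    define uo where "uo = (\<lambda>k. if k10odd k then u k else 0)"
    have ue: "ue \<in> k10even_part" and uo: "uo \<in> k10odd_part"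
      by (auto simp: ue_def uo_def k10even_part_def k10odd_part_def)
    have "u = k10add ue uo" by (auto simp: ue_def uo_def k10add_def)
    then have "\<phi> u = k10add (\<phi> ue) (\<phi> uo)" using P(1) by metis
    then have "\<phi> ue = (\<lambda>k. \<phi> u k - \<phi> uo k)" by (auto simp: k10add_def)
    then have "\<phi> ue \<in> k10odd_part" using that P(6)[OF uo] by (auto simp: k10odd_part_def)
    moreover have "\<phi> ue \<in> k10even_part" using P(5)[OF ue] .
    ultimately have "\<phi> ue = zv" by (auto simp: k10even_part_def k10odd_part_def zv_def)
    then have "ue = zv" using Aut_zero[OF assms] Aut_inj[OF assms] by metis
    then show ?thesis by (auto simp: ue_def zv_def k10odd_part_def fun_eq_iff split: if_splits)
  qed
  have 5: "inv \<phi> ` k10even_part \<subseteq> k10even_part"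
    using evodd fi by auto
  have 6: "inv \<phi> ` k10odd_part \<subseteq> k10odd_part"
    using oddodd fi by auto
  show ?thesis unfolding AutK10_def using 1 2 3 4 5 6 by blast
qed

lemma Aut_even_onto:
  assumes "\<phi> \<in> AutK10" "w \<in> k10even_part"
  shows "\<exists>z\<in>k10even_part. \<phi> z = w"
proof -
  have "inv \<phi> w \<in> k10even_part" using Aut_props(5)[OF Aut_inv[OF assms(1)] assms(2)] .
  moreover have "\<phi> (inv \<phi> w) = w" using Aut_props(3)[OF assms(1)] by (simp add: bij_is_surj surj_f_inv_f)
  ultimately show ?thesis by blast
qed

lemma Aut_comp:
  assumes "\<phi> \<in> AutK10" "\<psi> \<in> AutK10" shows "\<phi> \<circ> \<psi> \<in> AutK10"
proof -
  note P = Aut_props[OF assms(1)] and Q = Aut_props[OF assms(2)]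
  show ?thesis unfolding AutK10_def using P Q
    by (auto simp: bij_comp)
qed

definition eps1 :: "'a::field k10" where
  "eps1 = (\<lambda>k. if k = Unit then -1/2 else if k = Ten E E then 2 else 0)"

definition fm34 :: "'a::field k10" where
  "fm34 = (\<lambda>k. if k = Unit then -3/4 else if k = Ten E E then 1 else 0)"

lemma even_iff: "u \<in> k10even_part \<longleftrightarrow> u (Ten E X) = 0 \<and> u (Ten E Y) = 0 \<and> u (Ten X E) = 0 \<and> u (Ten Y E) = 0"
proof
  assume "u \<in> k10even_part" then show "u (Ten E X) = 0 \<and> u (Ten E Y) = 0 \<and> u (Ten X E) = 0 \<and> u (Ten Y E) = 0"
    by (simp add: k10even_part_def k10odd_def k3odd_def)
next
  assume a: "u (Ten E X) = 0 \<and> u (Ten E Y) = 0 \<and> u (Ten X E) = 0 \<and> u (Ten Y E) = 0"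
  have "u i = 0" if "k10odd i" for i
    using that a by (cases i) (auto simp: k10odd_def k3odd_def, (metis k3b.exhaust)+)
  then show "u \<in> k10even_part" by (simp add: k10even_part_def)
qed

lemma Vspace_iff: "v \<in> Vspace \<longleftrightarrow> v Unit = 0 \<and> v (Ten E E) = 0 \<and> v (Ten E X) = 0 \<and> v (Ten E Y) = 0 \<and> v (Ten X E) = 0 \<and> v (Ten Y E) = 0"
proof
  assume "v \<in> Vspace" then show "v Unit = 0 \<and> v (Ten E E) = 0 \<and> v (Ten E X) = 0 \<and> v (Ten E Y) = 0 \<and> v (Ten X E) = 0 \<and> v (Ten Y E) = 0"
    by (simp add: Vspace_def Vb_def k3odd_def)
next
  assume a: "v Unit = 0 \<and> v (Ten E E) = 0 \<and> v (Ten E X) = 0 \<and> v (Ten E Y) = 0 \<and> v (Ten X E) = 0 \<and> v (Ten Y E) = 0"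
  have "v i = 0" if "i \<notin> Vb" for i
  proof (cases i)
    case Unit then show ?thesis using a by simp
  next
    case (Ten s t)
    then have "s = E \<or> t = E" using that by (auto simp: Vb_def k3odd_def)
    then show ?thesis using a Ten by (cases s; cases t) auto
  qed
  then show "v \<in> Vspace" by (simp add: Vspace_def)
qed

lemma two_pows:
  assumes "(2::'a::field) \<noteq> 0"
  shows "(4::'a) \<noteq> 0" "(8::'a) \<noteq> 0" "(16::'a) \<noteq> 0" "(32::'a) \<noteq> 0" "(64::'a) \<noteq> 0"
proof -
  have f4: "(4::'a) \<noteq> 0" using mult_eq_0_iff[of "2::'a" 2] assms by simp
  have f8: "(8::'a) \<noteq> 0" using mult_eq_0_iff[of "4::'a" 2] assms f4 by simp
  have f16: "(16::'a) \<noteq> 0" using mult_eq_0_iff[of "8::'a" 2] assms f8 by simp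
  have f32: "(32::'a) \<noteq> 0" using mult_eq_0_iff[of "16::'a" 2] assms f16 by simp
  have f64: "(64::'a) \<noteq> 0" using mult_eq_0_iff[of "32::'a" 2] assms f32 by simp
  show "(4::'a) \<noteq> 0" "(8::'a) \<noteq> 0" "(16::'a) \<noteq> 0" "(32::'a) \<noteq> 0" "(64::'a) \<noteq> 0"
    using f4 f8 f16 f32 f64 by simp_all
qed

lemma numeral_Bit0_eq0:
  assumes "(2::'a::field) \<noteq> 0"
  shows "(numeral (Num.Bit0 n) = (0::'a)) = (numeral n = (0::'a))"
proof -
  have "(numeral (Num.Bit0 n) :: 'a) = 2 * numeral n"
    by (metis mult_2 numeral_Bit0)
  then show ?thesis using assms by (metis mult_eq_0_iff)
qed

lemma ne_8_24:
  assumes "(2::'a::field) \<noteq> 0" shows "(8::'a) \<noteq> 24"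
proof
  assume "(8::'a) = 24"
  then have "(24::'a) - 8 = 0" by simp
  then have "(16::'a) = 0" by simp
  then show False using assms numeral_Bit0_eq0[OF assms] by simp
qed

lemma eps1_mul:
  assumes "z \<in> k10even_part" and c2: "(2::'a::field) \<noteq> 0"
  shows "k10mul eps1 z = k10smul (z Unit + 3/4 * z (Ten E E)) (eps1 :: 'a::field k10)"
proof
  fix k
  note tp = two_pows[OF c2]
  have z: "z (Ten E X) = 0" "z (Ten E Y) = 0" "z (Ten X E) = 0" "z (Ten Y E) = 0"
    using assms by (simp_all add: even_iff)
  show "k10mul eps1 z k = k10smul (z Unit + 3/4 * z (Ten E E)) eps1 k"
  proof (cases k)
    case Unit then show ?thesis
      by (simp add: k10mul_def sum_k10b eps1_def k10smul_def z basisvec_def k3odd_def field_simps c2 numeral_Bit0_eq0[OF c2])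
  next
    case (Ten p q) then show ?thesis
      by (cases p; cases q; simp add: k10mul_def sum_k10b eps1_def k10smul_def z basisvec_def k3odd_def field_simps c2 numeral_Bit0_eq0[OF c2])
  qed
qed

lemma V_mul:
  assumes "u \<in> Vspace" "w \<in> Vspace" and c2: "(2::'a::field) \<noteq> 0"
  shows "k10mul u w = k10smul (- bV u w) (fm34 :: 'a k10)"
proof
  fix k
  have u: "u Unit = 0" "u (Ten E E) = 0" "u (Ten E X) = 0" "u (Ten E Y) = 0" "u (Ten X E) = 0" "u (Ten Y E) = 0"
    using assms(1) by (simp_all add: Vspace_iff)
  have w: "w Unit = 0" "w (Ten E E) = 0" "w (Ten E X) = 0" "w (Ten E Y) = 0" "w (Ten X E) = 0" "w (Ten Y E) = 0"
    using assms(2) by (simp_all add: Vspace_iff)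
  show "k10mul u w k = k10smul (- bV u w) fm34 k"
  proof (cases k)
    case Unit then show ?thesis
      by (simp add: k10mul_def sum_k10b fm34_def k10smul_def u w bV_def k3odd_def field_simps c2 numeral_Bit0_eq0[OF c2])
  next
    case (Ten p q) then show ?thesis
      by (cases p; cases q; simp add: k10mul_def sum_k10b fm34_def k10smul_def u w bV_def k3odd_def field_simps c2 numeral_Bit0_eq0[OF c2])
  qed
qed

lemma step_XX:
  fixes e :: "'a::field k10"
  assumes "e \<in> k10even_part" "k10mul e (basisvec (Ten X X)) = k10smul c e" and c2: "(2::'a) \<noteq> 0"
    and nz: "e Unit \<noteq> 0 \<or> e (Ten E E) \<noteq> 0 \<or> e (Ten X X) \<noteq> 0 \<or> e (Ten X Y) \<noteq> 0 \<or> e (Ten Y X) \<noteq> 0 \<or> e (Ten Y Y) \<noteq> 0"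
  shows "e (Ten Y Y) = 0 \<and> e Unit + e (Ten E E) / 4 = 0"
proof -
  have z: "e (Ten E X) = 0" "e (Ten E Y) = 0" "e (Ten X E) = 0" "e (Ten Y E) = 0"
    using assms by (simp_all add: even_iff)
  have "k10mul e (basisvec (Ten X X)) k = k10smul c e k" for k using assms(2) by simp
  note h = this[of Unit] this[of "Ten E E"] this[of "Ten X X"] this[of "Ten X Y"] this[of "Ten Y X"] this[of "Ten Y Y"]
  note h2 = h[unfolded k10mul_def sum_k10b k10smul_def basisvec_def, simplified, simplified k3odd_def, simplified]
  show ?thesis
  proof (cases "c = 0")
    case True then show ?thesis using h2 z c2 numeral_Bit0_eq0[OF c2] by (auto simp: field_simps basisvec_def)
  next
    case False then show ?thesis using h2 z nz c2 numeral_Bit0_eq0[OF c2] by (auto simp: field_simps basisvec_def)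
  qed
qed

lemma step_XY:
  fixes e :: "'a::field k10"
  assumes "e \<in> k10even_part" "k10mul e (basisvec (Ten X Y)) = k10smul c e" and c2: "(2::'a) \<noteq> 0"
    and nz: "e Unit \<noteq> 0 \<or> e (Ten E E) \<noteq> 0 \<or> e (Ten X X) \<noteq> 0 \<or> e (Ten X Y) \<noteq> 0 \<or> e (Ten Y X) \<noteq> 0 \<or> e (Ten Y Y) \<noteq> 0"
  shows "e (Ten Y X) = 0 \<and> e Unit + e (Ten E E) / 4 = 0"
proof -
  have z: "e (Ten E X) = 0" "e (Ten E Y) = 0" "e (Ten X E) = 0" "e (Ten Y E) = 0"
    using assms by (simp_all add: even_iff)
  have "k10mul e (basisvec (Ten X Y)) k = k10smul c e k" for k using assms(2) by simp
  note h = this[of Unit] this[of "Ten E E"] this[of "Ten X X"] this[of "Ten X Y"] this[of "Ten Y X"] this[of "Ten Y Y"]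
  note h2 = h[unfolded k10mul_def sum_k10b k10smul_def basisvec_def, simplified, simplified k3odd_def, simplified]
  show ?thesis
  proof (cases "c = 0")
    case True then show ?thesis using h2 z c2 numeral_Bit0_eq0[OF c2] by (auto simp: field_simps basisvec_def)
  next
    case False then show ?thesis using h2 z nz c2 numeral_Bit0_eq0[OF c2] by (auto simp: field_simps basisvec_def)
  qed
qed

lemma step_YX:
  fixes e :: "'a::field k10"
  assumes "e \<in> k10even_part" "k10mul e (basisvec (Ten Y X)) = k10smul c e" and c2: "(2::'a) \<noteq> 0"
    and nz: "e Unit \<noteq> 0 \<or> e (Ten E E) \<noteq> 0 \<or> e (Ten X X) \<noteq> 0 \<or> e (Ten X Y) \<noteq> 0 \<or> e (Ten Y X) \<noteq> 0 \<or> e (Ten Y Y) \<noteq> 0"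
  shows "e (Ten X Y) = 0 \<and> e Unit + e (Ten E E) / 4 = 0"
proof -
  have z: "e (Ten E X) = 0" "e (Ten E Y) = 0" "e (Ten X E) = 0" "e (Ten Y E) = 0"
    using assms by (simp_all add: even_iff)
  have "k10mul e (basisvec (Ten Y X)) k = k10smul c e k" for k using assms(2) by simp
  note h = this[of Unit] this[of "Ten E E"] this[of "Ten X X"] this[of "Ten X Y"] this[of "Ten Y X"] this[of "Ten Y Y"]
  note h2 = h[unfolded k10mul_def sum_k10b k10smul_def basisvec_def, simplified, simplified k3odd_def, simplified]
  show ?thesis
  proof (cases "c = 0")
    case True then show ?thesis using h2 z c2 numeral_Bit0_eq0[OF c2] by (auto simp: field_simps basisvec_def)
  next
    case False then show ?thesis using h2 z nz c2 numeral_Bit0_eq0[OF c2] by (auto simp: field_simps basisvec_def)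
  qed
qed

lemma step_YY:
  fixes e :: "'a::field k10"
  assumes "e \<in> k10even_part" "k10mul e (basisvec (Ten Y Y)) = k10smul c e" and c2: "(2::'a) \<noteq> 0"
    and nz: "e Unit \<noteq> 0 \<or> e (Ten E E) \<noteq> 0 \<or> e (Ten X X) \<noteq> 0 \<or> e (Ten X Y) \<noteq> 0 \<or> e (Ten Y X) \<noteq> 0 \<or> e (Ten Y Y) \<noteq> 0"
  shows "e (Ten X X) = 0 \<and> e Unit + e (Ten E E) / 4 = 0"
proof -
  have z: "e (Ten E X) = 0" "e (Ten E Y) = 0" "e (Ten X E) = 0" "e (Ten Y E) = 0"
    using assms by (simp_all add: even_iff)
  have "k10mul e (basisvec (Ten Y Y)) k = k10smul c e k" for k using assms(2) by simp
  note h = this[of Unit] this[of "Ten E E"] this[of "Ten X X"] this[of "Ten X Y"] this[of "Ten Y X"] this[of "Ten Y Y"]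
  note h2 = h[unfolded k10mul_def sum_k10b k10smul_def basisvec_def, simplified, simplified k3odd_def, simplified]
  show ?thesis
  proof (cases "c = 0")
    case True then show ?thesis using h2 z c2 numeral_Bit0_eq0[OF c2] by (auto simp: field_simps basisvec_def)
  next
    case False then show ?thesis using h2 z nz c2 numeral_Bit0_eq0[OF c2] by (auto simp: field_simps basisvec_def)
  qed
qed

lemma zv_iff: "u = zv \<longleftrightarrow> (\<forall>k. u k = 0)"
  by (auto simp: zv_def)

lemma eq_by_coords:
  assumes "u Unit = v Unit" "\<And>p q. u (Ten p q) = v (Ten p q)"
  shows "u = v"
proof
  fix k show "u k = v k" using assms by (cases k) auto
qed

lemma char_eps1:
  fixes e :: "'a::field k10"
  assumes ev: "e \<in> k10even_part" and ne: "e \<noteq> zv" and idem: "k10mul e e = e" and c2: "(2::'a) \<noteq> 0"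
    and h: "\<And>s t. k3odd s \<Longrightarrow> k3odd t \<Longrightarrow> \<exists>c. k10mul e (basisvec (Ten s t)) = k10smul c e"
  shows "e = eps1"
proof -
  have z: "e (Ten E X) = 0" "e (Ten E Y) = 0" "e (Ten X E) = 0" "e (Ten Y E) = 0"
    using ev by (simp_all add: even_iff)
  have nz: "e Unit \<noteq> 0 \<or> e (Ten E E) \<noteq> 0 \<or> e (Ten X X) \<noteq> 0 \<or> e (Ten X Y) \<noteq> 0 \<or> e (Ten Y X) \<noteq> 0 \<or> e (Ten Y Y) \<noteq> 0"
  proof (rule ccontr)
    assume "\<not> ?thesis"
    then have "e = zv" using z by (intro eq_by_coords) (auto simp: zv_def, (case_tac p; case_tac q; simp)+)
    then show False using ne by simp
  qed
  obtain c1 where c1: "k10mul e (basisvec (Ten X X)) = k10smul c1 e" using h[of X X] by (auto simp: k3odd_def)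
  obtain c2' where c2': "k10mul e (basisvec (Ten X Y)) = k10smul c2' e" using h[of X Y] by (auto simp: k3odd_def)
  obtain c3 where c3: "k10mul e (basisvec (Ten Y X)) = k10smul c3 e" using h[of Y X] by (auto simp: k3odd_def)
  obtain c4 where c4: "k10mul e (basisvec (Ten Y Y)) = k10smul c4 e" using h[of Y Y] by (auto simp: k3odd_def)
  have v: "e (Ten X X) = 0" "e (Ten X Y) = 0" "e (Ten Y X) = 0" "e (Ten Y Y) = 0"
    and ab: "e Unit + e (Ten E E) / 4 = 0"
    using step_XX[OF ev c1 c2 nz] step_XY[OF ev c2' c2 nz] step_YX[OF ev c3 c2 nz] step_YY[OF ev c4 c2 nz] by auto
  have "k10mul e e (Ten E E) = e (Ten E E)" using idem by simp
  then have sq: "2 * e Unit * e (Ten E E) + e (Ten E E) * e (Ten E E) = e (Ten E E)"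
    by (simp add: k10mul_def sum_k10b z v basisvec_def k3odd_def algebra_simps)
  have a: "e Unit = - e (Ten E E) / 4" using ab by (simp add: field_simps numeral_Bit0_eq0[OF c2] eq_neg_iff_add_eq_0 add.commute)
  have "e (Ten E E) \<noteq> 0" using nz v a by auto
  then have b0: "2 * e (Ten E E) = 2 * 2" using sq a c2 by (simp add: field_simps numeral_Bit0_eq0[OF c2])
  then have b: "e (Ten E E) = 2" using c2 by (metis mult_left_cancel)
  show ?thesis
  proof (rule eq_by_coords)
    show "e Unit = eps1 Unit" using a b c2 by (simp add: eps1_def numeral_Bit0_eq0[OF c2])
    fix p q show "e (Ten p q) = eps1 (Ten p q)" using a b z v by (cases p; cases q; simp add: eps1_def)
  qed
qed

lemma eps1_even: "eps1 \<in> k10even_part"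
  by (simp add: even_iff eps1_def)

lemma eps1_nz: "(2::'a::field) \<noteq> 0 \<Longrightarrow> (eps1::'a k10) \<noteq> zv"
  by (auto simp: eps1_def zv_def fun_eq_iff)

lemma bv_even: "\<not> k10odd i \<Longrightarrow> basisvec i \<in> k10even_part"
  by (auto simp: k10even_part_def basisvec_def)

lemma Aut_eps1:
  fixes \<phi> :: "'a::field k10 \<Rightarrow> 'a k10"
  assumes A: "\<phi> \<in> AutK10" and c2: "(2::'a) \<noteq> 0"
  shows "\<phi> eps1 = eps1"
proof (rule char_eps1)
  note P = Aut_props[OF A]
  show "\<phi> eps1 \<in> k10even_part" using P(5) eps1_even by blast
  show "\<phi> eps1 \<noteq> zv" using Aut_zero[OF A] Aut_inj[OF A] eps1_nz[OF c2] by metis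
  have "k10mul eps1 eps1 = k10smul (eps1 Unit + 3/4 * eps1 (Ten E E)) (eps1::'a k10)"
    by (rule eps1_mul[OF eps1_even c2])
  also have "\<dots> = eps1" using c2 by (simp add: eps1_def k10smul_def field_simps numeral_Bit0_eq0[OF c2])
  finally have "k10mul eps1 eps1 = (eps1::'a k10)" .
  then show "k10mul (\<phi> eps1) (\<phi> eps1) = \<phi> eps1" using P(4) by metis
  show "(2::'a) \<noteq> 0" by fact
  fix s t assume st: "k3odd s" "k3odd t"
  have "basisvec (Ten s t) \<in> k10even_part" using st by (intro bv_even) (simp add: k10odd_def)
  then obtain z where z: "z \<in> k10even_part" "\<phi> z = basisvec (Ten s t)" using Aut_even_onto[OF A] by blast
  have "k10mul (\<phi> eps1) (basisvec (Ten s t)) = \<phi> (k10mul eps1 z)" using P(4) z by metis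
  also have "\<dots> = \<phi> (k10smul (z Unit + 3/4 * z (Ten E E)) eps1)" using eps1_mul[OF z(1) c2] by simp
  also have "\<dots> = k10smul (z Unit + 3/4 * z (Ten E E)) (\<phi> eps1)" using P(2) by simp
  finally show "\<exists>c. k10mul (\<phi> eps1) (basisvec (Ten s t)) = k10smul c (\<phi> eps1)" by blast
qed

lemma fv_decomp: "(2::'a::field) \<noteq> 0 \<Longrightarrow> basisvec (Ten E E) = k10smul (1/2) (k10add eps1 (k10smul (1/2) (basisvec Unit :: 'a k10)))"
  by (rule eq_by_coords) (auto simp: basisvec_def eps1_def k10smul_def k10add_def)

lemma fm34_decomp: "fm34 = k10add (basisvec (Ten E E)) (k10smul (-3/4) (basisvec Unit :: 'a::field k10))"
  by (rule eq_by_coords) (auto simp: basisvec_def fm34_def k10smul_def k10add_def)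

lemma Aut_fv:
  assumes A: "\<phi> \<in> AutK10" and c2: "(2::'a::field) \<noteq> 0"
  shows "\<phi> (basisvec (Ten E E)) = (basisvec (Ten E E) :: 'a k10)"
  using Aut_props(1,2)[OF A] Aut_eps1[OF A c2] Aut_one[OF A] fv_decomp[OF c2] by metis

lemma Aut_fm34:
  assumes A: "\<phi> \<in> AutK10" and c2: "(2::'a::field) \<noteq> 0"
  shows "\<phi> fm34 = (fm34 :: 'a k10)"
  using Aut_props(1,2)[OF A] Aut_fv[OF A c2] Aut_one[OF A] fm34_decomp by metis

lemma Aut_V:
  fixes \<phi> :: "'a::field k10 \<Rightarrow> 'a k10"
  assumes A: "\<phi> \<in> AutK10" and c2: "(2::'a) \<noteq> 0" and v: "v \<in> Vspace"
  shows "\<phi> v \<in> Vspace"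
proof -
  note P = Aut_props[OF A]
  define z where "z = \<phi> v"
  have vev: "v \<in> k10even_part" using v by (simp add: even_iff Vspace_iff)
  then have zev: "z \<in> k10even_part" using P(5) z_def by blast
  have zo: "z (Ten E X) = 0" "z (Ten E Y) = 0" "z (Ten X E) = 0" "z (Ten Y E) = 0"
    using zev by (simp_all add: even_iff)
  have "k10mul eps1 v = k10smul (v Unit + 3/4 * v (Ten E E)) (eps1::'a k10)"
    by (rule eps1_mul[OF vev c2])
  also have "\<dots> = zv" using v by (simp add: Vspace_iff k10smul_def zv_def)
  finally have "k10mul eps1 v = zv" .
  then have "k10mul eps1 z = zv" using P(4) Aut_eps1[OF A c2] Aut_zero[OF A] z_def by metis
  then have "k10smul (z Unit + 3/4 * z (Ten E E)) (eps1::'a k10) = zv" using eps1_mul[OF zev c2] by simp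
  then have "(z Unit + 3/4 * z (Ten E E)) * eps1 Unit = 0" by (metis k10smul_def zv_def)
  then have zU: "z Unit = - 3/4 * z (Ten E E)" using c2 by (simp add: eps1_def eq_neg_iff_add_eq_0)
  have "k10mul v v = k10smul (- bV v v) fm34" by (rule V_mul[OF v v c2])
  then have zz: "k10mul z z = k10smul (- bV v v) fm34" using P(2,4) Aut_fm34[OF A c2] z_def by metis
  have zc: "z (Ten E E) * z (Ten s t) = 0" if "s \<noteq> E" "t \<noteq> E" for s t
  proof -
    have "k10mul z z (Ten s t) = 0" using zz that by (simp add: k10smul_def fm34_def)
    then show ?thesis using that zo zU
      by (cases s; cases t; simp_all add: k10mul_def sum_k10b k3odd_def basisvec_def algebra_simps c2 numeral_Bit0_eq0[OF c2] ne_8_24[OF c2])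
  qed
  have d0: "z (Ten E E) = 0"
  proof (rule ccontr)
    assume d: "z (Ten E E) \<noteq> 0"
    have "z (Ten s t) = 0" if "s \<noteq> E" "t \<noteq> E" for s t using zc[OF that] d by simp
    then have "z = k10smul (z (Ten E E)) fm34"
      using zo zU by (intro eq_by_coords) (auto simp: k10smul_def fm34_def, (case_tac p; case_tac q; simp)+)
    then have "\<phi> v = \<phi> (k10smul (z (Ten E E)) fm34)" using P(2) Aut_fm34[OF A c2] z_def by metis
    then have "v = k10smul (z (Ten E E)) fm34" using Aut_inj[OF A] by blast
    then have "v (Ten E E) = z (Ten E E)" by (simp add: k10smul_def fm34_def)
    then show False using v d by (simp add: Vspace_iff)
  qed
  show ?thesis using zo zU d0 z_def by (simp add: Vspace_iff)
qed

lemma Aut_OVb: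
  fixes \<phi> :: "'a::field k10 \<Rightarrow> 'a k10"
  assumes A: "\<phi> \<in> AutK10" and c2: "(2::'a) \<noteq> 0"
  shows "\<phi> \<in> OVb"
proof -
  note P = Aut_props[OF A]
  have inj: "inj_on \<phi> Vspace" using P(3) by (metis bij_def inj_on_subset subset_UNIV)
  have sub: "\<phi> ` Vspace \<subseteq> Vspace" using Aut_V[OF A c2] by blast
  have sup: "Vspace \<subseteq> \<phi> ` Vspace"
  proof
    fix v :: "'a k10" assume v: "v \<in> Vspace"
    have "inv \<phi> v \<in> Vspace" by (rule Aut_V[OF Aut_inv[OF A] c2 v])
    moreover have "\<phi> (inv \<phi> v) = v" using P(3) by (simp add: bij_is_surj surj_f_inv_f)
    ultimately show "v \<in> \<phi> ` Vspace" by (metis image_eqI)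
  qed
  have iso: "bV (\<phi> u) (\<phi> w) = bV u w" if u: "u \<in> Vspace" and w: "w \<in> Vspace" for u w
  proof -
    have "k10smul (- bV (\<phi> u) (\<phi> w)) fm34 = k10mul (\<phi> u) (\<phi> w)"
      using V_mul[OF Aut_V[OF A c2 u] Aut_V[OF A c2 w] c2] by simp
    also have "\<dots> = \<phi> (k10mul u w)" using P(4) by simp
    also have "\<dots> = k10smul (- bV u w) fm34" using V_mul[OF u w c2] P(2) Aut_fm34[OF A c2] by simp
    finally have "k10smul (- bV (\<phi> u) (\<phi> w)) fm34 (Ten E E) = k10smul (- bV u w) (fm34::'a k10) (Ten E E)" by simp
    then show ?thesis by (simp add: k10smul_def fm34_def)
  qed
  show ?thesis unfolding OVb_def bij_betw_def
    using P(1,2) inj sub sup iso by blast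
qed

lemma odd_iff: "u \<in> k10odd_part \<longleftrightarrow> u Unit = 0 \<and> u (Ten E E) = 0 \<and> u (Ten X X) = 0 \<and> u (Ten X Y) = 0 \<and> u (Ten Y X) = 0 \<and> u (Ten Y Y) = 0"
proof
  assume "u \<in> k10odd_part" then show "u Unit = 0 \<and> u (Ten E E) = 0 \<and> u (Ten X X) = 0 \<and> u (Ten X Y) = 0 \<and> u (Ten Y X) = 0 \<and> u (Ten Y Y) = 0"
    by (simp add: k10odd_part_def k10odd_def k3odd_def)
next
  assume a: "u Unit = 0 \<and> u (Ten E E) = 0 \<and> u (Ten X X) = 0 \<and> u (Ten X Y) = 0 \<and> u (Ten Y X) = 0 \<and> u (Ten Y Y) = 0"
  have "u i = 0" if "\<not> k10odd i" for i
  proof (cases i)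
    case Unit then show ?thesis using a by simp
  next
    case (Ten s t) then show ?thesis using a that by (cases s; cases t) (auto simp: k10odd_def k3odd_def)
  qed
  then show "u \<in> k10odd_part" by (simp add: k10odd_part_def)
qed

lemma mulbv: "k10mul (basisvec i) u k = (\<Sum>j\<in>UNIV. u j * k10bmul i j k)"
proof -
  have "k10mul (basisvec i) u k = (\<Sum>i'\<in>UNIV. if i' = i then (\<Sum>j\<in>UNIV. u j * k10bmul i j k) else 0)"
    unfolding k10mul_def by (intro sum.cong refl) (auto simp: basisvec_def)
  then show ?thesis by simp
qed

lemma mulbvbv: "k10mul (basisvec i) (basisvec j) = k10bmul i j"
  using mul_bv_scaled[of 1 i 1 j] by simp

lemma eq10:
  assumes "u Unit = v Unit" "u (Ten E E) = v (Ten E E)" "u (Ten E X) = v (Ten E X)" "u (Ten E Y) = v (Ten E Y)"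
    "u (Ten X E) = v (Ten X E)" "u (Ten X X) = v (Ten X X)" "u (Ten X Y) = v (Ten X Y)"
    "u (Ten Y E) = v (Ten Y E)" "u (Ten Y X) = v (Ten Y X)" "u (Ten Y Y) = v (Ten Y Y)"
  shows "u = v"
proof (rule eq_by_coords)
  show "u Unit = v Unit" by fact
  fix p q show "u (Ten p q) = v (Ten p q)" using assms by (cases p; cases q) simp_all
qed

lemma id_Aut: "id \<in> AutK10"
  by (simp add: AutK10_def)

lemma kernel:
  fixes \<phi> :: "'a::field k10 \<Rightarrow> 'a k10"
  assumes A: "\<phi> \<in> AutK10" and c2: "(2::'a) \<noteq> 0" and fx: "\<forall>v\<in>Vspace. \<phi> v = v"
  shows "\<phi> = id \<or> \<phi> = tauK10"
proof -
  note P = Aut_props[OF A]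
  have fV: "\<phi> (basisvec (Ten s t)) = basisvec (Ten s t)" if "s \<noteq> E" "t \<noteq> E" for s t
    using fx that by (simp add: Vspace_iff basisvec_def)
  have odd_bv: "basisvec (Ten s t) \<in> k10odd_part" if "k3odd s \<noteq> k3odd t" for s t
    using that by (auto simp: k10odd_part_def basisvec_def k10odd_def)
  define p1 where "p1 = \<phi> (basisvec (Ten E X))"
  define p2 where "p2 = \<phi> (basisvec (Ten E Y))"
  define p3 where "p3 = \<phi> (basisvec (Ten X E))"
  define p4 where "p4 = \<phi> (basisvec (Ten Y E))"
  have o1: "p1 \<in> k10odd_part" using P(6) odd_bv[of E X] p1_def by (simp add: k3odd_def)
  have o2: "p2 \<in> k10odd_part" using P(6) odd_bv[of E Y] p2_def by (simp add: k3odd_def)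
  have o3: "p3 \<in> k10odd_part" using P(6) odd_bv[of X E] p3_def by (simp add: k3odd_def)
  have o4: "p4 \<in> k10odd_part" using P(6) odd_bv[of Y E] p4_def by (simp add: k3odd_def)
  have rel: "\<phi> (k10bmul (Ten s t) j) = k10mul (basisvec (Ten s t)) (\<phi> (basisvec j))" if "s \<noteq> E" "t \<noteq> E" for s t j
    using P(4)[of "basisvec (Ten s t)" "basisvec j"] fV[OF that] by (simp add: mulbvbv)
  have zero_of: "\<phi> u = zv" if "u = zv" for u using that Aut_zero[OF A] by simp
  have b1: "k10bmul (Ten X X) (Ten E X) = (zv::'a k10)" by (rule eq10) (simp_all add: zv_def k3odd_def)
  have b2: "k10bmul (Ten Y X) (Ten E X) = (zv::'a k10)" by (rule eq10) (simp_all add: zv_def k3odd_def)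
  have b3: "k10bmul (Ten X Y) (Ten E Y) = (zv::'a k10)" by (rule eq10) (simp_all add: zv_def k3odd_def)
  have b4: "k10bmul (Ten Y Y) (Ten E Y) = (zv::'a k10)" by (rule eq10) (simp_all add: zv_def k3odd_def)
  have b5: "k10bmul (Ten X X) (Ten E Y) = k10smul (1/2) (basisvec (Ten X E) :: 'a k10)"
    by (rule eq10) (simp_all add: k10smul_def basisvec_def k3odd_def)
  have b6: "k10bmul (Ten Y X) (Ten E Y) = k10smul (1/2) (basisvec (Ten Y E) :: 'a k10)"
    by (rule eq10) (simp_all add: k10smul_def basisvec_def k3odd_def)
  have b7: "k10bmul (Ten Y Y) (Ten E X) = k10smul (-1/2) (basisvec (Ten Y E) :: 'a k10)"
    by (rule eq10) (simp_all add: k10smul_def basisvec_def k3odd_def)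
  have b8: "k10bmul (Ten E X) (Ten E Y) = k10add (basisvec (Ten E E)) (k10smul (-3/8) (basisvec Unit :: 'a k10))"
    by (rule eq10) (simp_all add: k10smul_def k10add_def basisvec_def k3odd_def)
  have r1: "k10mul (basisvec (Ten X X)) p1 = zv" using rel[of X X "Ten E X"] b1 zero_of p1_def by simp
  have r2: "k10mul (basisvec (Ten Y X)) p1 = zv" using rel[of Y X "Ten E X"] b2 zero_of p1_def by simp
  have r3: "k10mul (basisvec (Ten X Y)) p2 = zv" using rel[of X Y "Ten E Y"] b3 zero_of p2_def by simp
  have r4: "k10mul (basisvec (Ten Y Y)) p2 = zv" using rel[of Y Y "Ten E Y"] b4 zero_of p2_def by simp
  have r5: "k10smul (1/2) p3 = k10mul (basisvec (Ten X X)) p2" using rel[of X X "Ten E Y"] b5 P(2) p2_def p3_def by simp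
  have r6: "k10smul (1/2) p4 = k10mul (basisvec (Ten Y X)) p2" using rel[of Y X "Ten E Y"] b6 P(2) p2_def p4_def by simp
  have r7: "k10smul (-1/2) p4 = k10mul (basisvec (Ten Y Y)) p1" using rel[of Y Y "Ten E X"] b7 P(2) p1_def p4_def by simp
  have fixed8: "\<phi> (k10bmul (Ten E X) (Ten E Y)) = k10bmul (Ten E X) (Ten E Y)"
    using b8 P(1,2) Aut_fv[OF A c2] Aut_one[OF A] by simp
  have r8: "k10mul p1 p2 = k10bmul (Ten E X) (Ten E Y)"
    using P(4)[of "basisvec (Ten E X)" "basisvec (Ten E Y)"] fixed8 p1_def p2_def by (simp add: mulbvbv)
  note o = o1[unfolded odd_iff] o2[unfolded odd_iff] o3[unfolded odd_iff] o4[unfolded odd_iff]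
  note S = sum_k10b k3odd_def zv_def k10smul_def basisvec_def
  have q1: "p1 (Ten E Y) = 0" "p1 (Ten Y E) = 0" "p1 (Ten X E) = 0"
    using fun_cong[OF r1, of "Ten X E"] fun_cong[OF r1, of "Ten E X"] fun_cong[OF r2, of "Ten E X"] o c2
    by (simp_all only: mulbv) (simp_all add: S)
  have q2: "p2 (Ten E X) = 0" "p2 (Ten Y E) = 0" "p2 (Ten X E) = 0"
    using fun_cong[OF r3, of "Ten X E"] fun_cong[OF r3, of "Ten E Y"] fun_cong[OF r4, of "Ten E Y"] o c2
    by (simp_all only: mulbv) (simp_all add: S)
  define l where "l = p1 (Ten E X)"
  define m where "m = p2 (Ten E Y)"
  have q3: "p3 (Ten X E) = m" "p3 (Ten E X) = 0" "p3 (Ten E Y) = 0" "p3 (Ten Y E) = 0"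
    using fun_cong[OF r5, of "Ten X E"] fun_cong[OF r5, of "Ten E X"] fun_cong[OF r5, of "Ten E Y"] fun_cong[OF r5, of "Ten Y E"] o q2 c2
    unfolding m_def by (simp_all only: mulbv) (simp_all add: S)
  have q4: "p4 (Ten Y E) = m" "p4 (Ten E X) = 0" "p4 (Ten E Y) = 0" "p4 (Ten X E) = 0"
    using fun_cong[OF r6, of "Ten Y E"] fun_cong[OF r6, of "Ten E X"] fun_cong[OF r6, of "Ten E Y"] fun_cong[OF r6, of "Ten X E"] o q2 c2
    unfolding m_def by (simp_all only: mulbv) (simp_all add: S)
  have q5: "p4 (Ten Y E) = l"
    using fun_cong[OF r7, of "Ten Y E"] o q1 c2
    unfolding l_def by (simp_all only: mulbv) (simp_all add: S)
  have ml: "m = l" using q4 q5 by simp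
  have e1: "p1 = k10smul l (basisvec (Ten E X))" using o q1 unfolding l_def by (intro eq10) (simp_all add: k10smul_def basisvec_def)
  have e2: "p2 = k10smul l (basisvec (Ten E Y))" using o q2 ml unfolding m_def by (intro eq10) (simp_all add: k10smul_def basisvec_def)
  have e3: "p3 = k10smul l (basisvec (Ten X E))" using o q3 ml by (intro eq10) (simp_all add: k10smul_def basisvec_def)
  have e4: "p4 = k10smul l (basisvec (Ten Y E))" using o q4 ml by (intro eq10) (simp_all add: k10smul_def basisvec_def)
  have "k10mul p1 p2 = (\<lambda>k. l * l * k10bmul (Ten E X) (Ten E Y) k)"
    unfolding e1 e2 k10smul_def by (rule mul_bv_scaled)
  then have "l * l * k10bmul (Ten E X) (Ten E Y) (Ten E E) = (k10bmul (Ten E X) (Ten E Y) (Ten E E) :: 'a)"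
    using r8 by metis
  then have ll: "l * l = 1" by (simp add: k3odd_def)
  have lpm: "l = 1 \<or> l = -1"
  proof -
    have "(l - 1) * (l + 1) = 0" using ll by (simp add: algebra_simps)
    then show ?thesis by (auto simp: eq_neg_iff_add_eq_0)
  qed
  have img: "\<phi> (basisvec i) = (if l = 1 then basisvec i else Phitau i)" for i
  proof (cases i)
    case Unit then show ?thesis using Aut_one[OF A] by (simp add: Phitau_def k10odd_def)
  next
    case (Ten s t)
    show ?thesis
    proof (cases "s = E \<and> t = E")
      case True then show ?thesis using Ten Aut_fv[OF A c2] by (simp add: Phitau_def k10odd_def k3odd_def)
    next
      case st: False
      show ?thesis
      proof (cases "s \<noteq> E \<and> t \<noteq> E")
        case True then show ?thesis using Ten fV by (auto simp: Phitau_def k10odd_def k3odd_def)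
      next
        case False
        then have "(s = E \<and> t = X) \<or> (s = E \<and> t = Y) \<or> (s = X \<and> t = E) \<or> (s = Y \<and> t = E)"
          using st by (cases s; cases t) auto
        then show ?thesis using Ten e1 e2 e3 e4 lpm p1_def p2_def p3_def p4_def
          by (auto simp: Phitau_def k10odd_def k3odd_def k10smul_def)
      qed
    qed
  qed
  have "\<phi> = linmap (\<lambda>i. \<phi> (basisvec i))" by (rule ext) (rule Aut_linmap[OF A])
  then show ?thesis
  proof (cases "l = 1")
    case True
    then have "\<phi> = linmap basisvec" using \<open>\<phi> = _\<close> img by simp
    then show ?thesis by (auto simp: linmap_basisvec fun_eq_iff)
  next
    case False
    then have "\<phi> = linmap Phitau" using \<open>\<phi> = _\<close> img by simp
    then show ?thesis by (simp add: tau_linmap)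
  qed
qed

fun mmul :: "'a::comm_ring_1 m2 \<Rightarrow> 'a m2 \<Rightarrow> 'a m2" where
  "mmul (a,b,c,d) (e,f,g,h) = (a*e + b*g, a*f + b*h, c*e + d*g, c*f + d*h)"

fun madd :: "'a::comm_ring_1 m2 \<Rightarrow> 'a m2 \<Rightarrow> 'a m2" where
  "madd (a,b,c,d) (e,f,g,h) = (a+e, b+f, c+g, d+h)"

fun bf :: "'a::comm_ring_1 m2 \<Rightarrow> 'a m2 \<Rightarrow> 'a" where
  "bf (a,b,c,d) (e,f,g,h) = a*h + d*e - b*g - c*f"

fun trn :: "'a m2 \<Rightarrow> 'a m2" where
  "trn (a,b,c,d) = (a,c,b,d)"

definition I2 :: "'a::comm_ring_1 m2" where "I2 = (1,0,0,1)"
definition E11 :: "'a::comm_ring_1 m2" where "E11 = (1,0,0,0)"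
definition E12 :: "'a::comm_ring_1 m2" where "E12 = (0,1,0,0)"
definition E21 :: "'a::comm_ring_1 m2" where "E21 = (0,0,1,0)"
definition E22 :: "'a::comm_ring_1 m2" where "E22 = (0,0,0,1)"

lemma mmul_assoc: "mmul (mmul A B) C = mmul A (mmul B C)"
  by (cases A; cases B; cases C) (simp add: algebra_simps)

lemma mmul_I2: "mmul I2 A = A" "mmul A I2 = A"
  by (cases A; simp add: I2_def)+

lemma adj_mul: "det2 A = 1 \<Longrightarrow> mmul (adj2 A) A = I2" "det2 A = 1 \<Longrightarrow> mmul A (adj2 A) = I2"
  by (cases A; simp add: I2_def algebra_simps)+

lemma det2_mmul: "det2 (mmul A B) = det2 A * det2 B"
  by (cases A; cases B) (simp add: algebra_simps)

lemma bf_left: "bf (mmul A M) (mmul A N) = det2 A * bf M N"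
  by (cases A; cases M; cases N) (simp add: algebra_simps)

lemma bf_right: "bf (mmul M B) (mmul N B) = det2 B * bf M N"
  by (cases B; cases M; cases N) (simp add: algebra_simps)

lemma mmul_madd: "mmul A (madd M N) = madd (mmul A M) (mmul A N)"
  by (cases A; cases M; cases N) (simp add: algebra_simps)

lemma bf_madd: "bf (madd M N) (madd M N) = bf M M + 2 * bf M N + bf N N"
  by (cases M; cases N) (simp add: algebra_simps)

lemma bf_self: "bf M M = 2 * det2 M"
  by (cases M) (simp add: algebra_simps)

lemma bf_sym: "bf M N = bf N M"
  by (cases M; cases N) (simp add: algebra_simps)

definition Rel :: "'a::comm_ring_1 m2 \<Rightarrow> 'a m2 \<Rightarrow> 'a m2 \<Rightarrow> 'a m2 \<Rightarrow> bool" where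
  "Rel G11 G12 G21 G22 \<longleftrightarrow>
     bf G11 G11 = 0 \<and> bf G11 G12 = 0 \<and> bf G11 G21 = 0 \<and> bf G11 G22 = 1 \<and>
     bf G12 G12 = 0 \<and> bf G12 G21 = -1 \<and> bf G12 G22 = 0 \<and>
     bf G21 G21 = 0 \<and> bf G21 G22 = 0 \<and> bf G22 G22 = 0"

lemma Rel_left: "det2 A = 1 \<Longrightarrow> Rel G11 G12 G21 G22 \<Longrightarrow> Rel (mmul A G11) (mmul A G12) (mmul A G21) (mmul A G22)"
  by (simp add: Rel_def bf_left)

lemma Rel_right: "det2 A = 1 \<Longrightarrow> Rel G11 G12 G21 G22 \<Longrightarrow> Rel (mmul G11 A) (mmul G12 A) (mmul G21 A) (mmul G22 A)"
  by (simp add: Rel_def bf_right)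

lemma idem_conj:
  fixes H :: "'a::field m2"
  assumes "det2 H = 0" and tr: "fst H + snd (snd (snd H)) = 1"
  shows "\<exists>C. det2 C = 1 \<and> mmul H C = mmul C E11"
proof -
  obtain h1 h2 h3 h4 where H: "H = (h1,h2,h3,h4)" by (cases H) auto
  have h4: "h4 = 1 - h1" using tr H by (simp add: eq_diff_eq add.commute)
  have d: "h1 * (1 - h1) = h2 * h3" using assms(1) H h4 by (simp add: algebra_simps)
  show ?thesis
  proof (cases "h2 = 0")
    case False
    let ?C = "(h2, -1, 1 - h1, h1 / h2)"
    have "det2 ?C = 1" using False by (simp add: field_simps)
    moreover have "mmul H ?C = mmul ?C E11"
      using False d by (simp add: H h4 E11_def field_simps)
    ultimately show ?thesis by blast
  next
    case True
    then have "h1 = 0 \<or> h1 = 1" using d by auto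
    then show ?thesis
    proof
      assume h1: "h1 = 1"
      let ?C = "(1, 0, h3, 1)"
      have "det2 ?C = 1" by simp
      moreover have "mmul H ?C = mmul ?C E11" using h1 True by (simp add: H h4 E11_def)
      ultimately show ?thesis by blast
    next
      assume h1: "h1 = 0"
      let ?C = "(0, -1, 1, h3)"
      have "det2 ?C = 1" by simp
      moreover have "mmul H ?C = mmul ?C E11" using h1 True by (simp add: H h4 E11_def)
      ultimately show ?thesis by blast
    qed
  qed
qed

lemma diag_conj:
  fixes s :: "'a::field"
  assumes "s \<noteq> 0"
  shows "det2 (s,0,0,1/s) = 1"
    "mmul (mmul (s,0,0,1/s) E11) (adj2 (s,0,0,1/s)) = E11"
    "mmul (mmul (s,0,0,1/s) E22) (adj2 (s,0,0,1/s)) = E22"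
    "mmul (mmul (s,0,0,1/s) E12) (adj2 (s,0,0,1/s)) = (0, s*s, 0, 0)"
    "mmul (mmul (s,0,0,1/s) E21) (adj2 (s,0,0,1/s)) = (0, 0, 1/(s*s), 0)"
  using assms by (simp_all add: E11_def E22_def E12_def E21_def)

lemma norm3:
  fixes K12 K21 :: "'a::field m2"
  assumes R: "Rel E11 K12 K21 E22" and sq: "\<forall>a::'a. \<exists>b. b ^ 2 = a" and c2: "(2::'a) \<noteq> 0"
  shows "\<exists>D. det2 D = 1 \<and> mmul (mmul D E11) (adj2 D) = E11 \<and> mmul (mmul D E22) (adj2 D) = E22 \<and>
     ((K12 = mmul (mmul D E12) (adj2 D) \<and> K21 = mmul (mmul D E21) (adj2 D)) \<or>
      (K12 = mmul (mmul D E21) (adj2 D) \<and> K21 = mmul (mmul D E12) (adj2 D)))"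
proof -
  obtain a b c d where K12: "K12 = (a,b,c,d)" by (cases K12) auto
  obtain a' b' c' d' where K21: "K21 = (a',b',c',d')" by (cases K21) auto
  have eqs: "d = 0" "a = 0" "d' = 0" "a' = 0" "a*d - b*c = 0 \<or> True" "b * c' + c * b' = 1"
    using R by (auto simp: Rel_def K12 K21 E11_def E22_def algebra_simps)
  have bc: "b * c = 0" "b' * c' = 0"
  proof -
    have "bf K12 K12 = 0" "bf K21 K21 = 0" using R by (auto simp: Rel_def)
    then show "b * c = 0" "b' * c' = 0" using eqs c2 by (auto simp: K12 K21)
  qed
  show ?thesis
  proof (cases "b = 0")
    case False
    then have c0: "c = 0" using bc by auto
    then have c': "c' = 1 / b" using eqs False by (simp add: field_simps)
    then have b'0: "b' = 0" using bc False by auto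
    obtain s where s: "s ^ 2 = b" using sq by blast
    then have s0: "s \<noteq> 0" using False by auto
    have "K12 = mmul (mmul (s,0,0,1/s) E12) (adj2 (s,0,0,1/s))" "K21 = mmul (mmul (s,0,0,1/s) E21) (adj2 (s,0,0,1/s))"
      using diag_conj[OF s0] s eqs c0 c' b'0 by (simp_all add: K12 K21 power2_eq_square)
    then show ?thesis using diag_conj[OF s0] by blast
  next
    case True
    then have c: "c * b' = 1" using eqs by simp
    then have c0: "c \<noteq> 0" by auto
    have b': "b' = 1 / c" using c c0 by (simp add: field_simps)
    then have c'0: "c' = 0" using bc c0 by auto
    obtain s where s: "s ^ 2 = 1 / c" using sq by blast
    then have s0: "s \<noteq> 0" using c0 by auto
    have ss0: "c * (s * s) = 1" using s c0 by (simp add: power2_eq_square field_simps)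
    then have "s * s \<noteq> 0" by auto
    then have ss: "1 / (s * s) = c" using ss0 by (simp add: field_simps)
    have "K12 = mmul (mmul (s,0,0,1/s) E21) (adj2 (s,0,0,1/s))" "K21 = mmul (mmul (s,0,0,1/s) E12) (adj2 (s,0,0,1/s))"
      using diag_conj[OF s0] s eqs True c'0 b' ss by (simp_all add: K12 K21 power2_eq_square)
    then show ?thesis using diag_conj[OF s0] by blast
  qed
qed

lemma conj_back:
  assumes "det2 C = 1" shows "mmul (mmul C (mmul (mmul (adj2 C) H) C)) (adj2 C) = H"
proof -
  have "mmul (mmul C (mmul (mmul (adj2 C) H) C)) (adj2 C) = mmul (mmul (mmul C (adj2 C)) H) (mmul C (adj2 C))"
    by (simp add: mmul_assoc)
  also have "\<dots> = H" using adj_mul[OF assms] by (simp add: mmul_I2)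
  finally show ?thesis .
qed

lemma classify:
  fixes G11 G12 G21 G22 :: "'a::field m2"
  assumes R: "Rel G11 G12 G21 G22" and sq: "\<forall>a::'a. \<exists>b. b ^ 2 = a" and c2: "(2::'a) \<noteq> 0"
  shows "\<exists>A B. det2 A = 1 \<and> det2 B = 1 \<and>
    ((G11 = mmul (mmul A E11) B \<and> G12 = mmul (mmul A E12) B \<and> G21 = mmul (mmul A E21) B \<and> G22 = mmul (mmul A E22) B) \<or>
     (G11 = mmul (mmul A E11) B \<and> G12 = mmul (mmul A E21) B \<and> G21 = mmul (mmul A E12) B \<and> G22 = mmul (mmul A E22) B))"
proof -
  define P where "P = madd G11 G22"
  have "bf P P = 2" using R by (simp add: P_def bf_madd Rel_def)
  then have dP: "det2 P = 1" using c2 by (simp add: bf_self)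
  have dPa: "det2 (adj2 P) = 1" using dP by (simp add: det2_adj2)
  define H11 where "H11 = mmul (adj2 P) G11"
  define H12 where "H12 = mmul (adj2 P) G12"
  define H21 where "H21 = mmul (adj2 P) G21"
  define H22 where "H22 = mmul (adj2 P) G22"
  have RH: "Rel H11 H12 H21 H22" using Rel_left[OF dPa R] by (simp add: H11_def H12_def H21_def H22_def)
  have sumH: "madd H11 H22 = I2" using adj_mul(1)[OF dP] by (simp add: H11_def H22_def P_def mmul_madd)
  have dH: "det2 H11 = 0" using RH c2 by (simp add: Rel_def bf_self)
  have trH: "fst H11 + snd (snd (snd H11)) = 1"
  proof -
    obtain h1 h2 h3 h4 where h: "H11 = (h1,h2,h3,h4)" by (cases H11) auto
    obtain k1 k2 k3 k4 where k: "H22 = (k1,k2,k3,k4)" by (cases H22) auto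
    have "k1 = 1 - h1" "k2 = - h2" "k3 = - h3" "k4 = 1 - h4" using sumH h k
      by (auto simp: I2_def eq_diff_eq add.commute eq_neg_iff_add_eq_0)
    then have H22: "H22 = (1 - h1, - h2, - h3, 1 - h4)" using k by simp
    have idt: "bf (h1,h2,h3,h4) (1 - h1, - h2, - h3, 1 - h4) = h1 + h4 - 2 * det2 (h1,h2,h3,h4)"
      by (simp add: algebra_simps)
    have "bf H11 H22 = 1" using RH by (simp add: Rel_def)
    then have "h1 + h4 - 2 * det2 (h1,h2,h3,h4) = 1" using idt h H22 by simp
    then show ?thesis using dH h by simp
  qed
  obtain C where dC: "det2 C = 1" and HC: "mmul H11 C = mmul C E11" using idem_conj[OF dH trH] by blast
  have dCa: "det2 (adj2 C) = 1" using dC by (simp add: det2_adj2)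
  define K11 where "K11 = mmul (mmul (adj2 C) H11) C"
  define K12 where "K12 = mmul (mmul (adj2 C) H12) C"
  define K21 where "K21 = mmul (mmul (adj2 C) H21) C"
  define K22 where "K22 = mmul (mmul (adj2 C) H22) C"
  have RK: "Rel K11 K12 K21 K22" using Rel_right[OF dC Rel_left[OF dCa RH]] by (simp add: K11_def K12_def K21_def K22_def)
  have K11: "K11 = E11"
  proof -
    have "K11 = mmul (adj2 C) (mmul H11 C)" by (simp add: K11_def mmul_assoc)
    also have "\<dots> = mmul (mmul (adj2 C) C) E11" using HC by (simp add: mmul_assoc)
    also have "\<dots> = E11" using adj_mul[OF dC] by (simp add: mmul_I2)
    finally show ?thesis .
  qed
  have "madd K11 K22 = I2"
  proof -
    have "madd K11 K22 = mmul (mmul (adj2 C) (madd H11 H22)) C"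
      unfolding K11_def K22_def by (cases C; cases H11; cases H22; simp add: algebra_simps)
    then show ?thesis using sumH adj_mul[OF dC] by (simp add: mmul_I2)
  qed
  then have K22: "K22 = E22" using K11
    by (cases K22) (auto simp: E11_def E22_def I2_def)
  obtain D where dD: "det2 D = 1" and D11: "mmul (mmul D E11) (adj2 D) = E11" and D22: "mmul (mmul D E22) (adj2 D) = E22"
    and Dc: "(K12 = mmul (mmul D E12) (adj2 D) \<and> K21 = mmul (mmul D E21) (adj2 D)) \<or>
      (K12 = mmul (mmul D E21) (adj2 D) \<and> K21 = mmul (mmul D E12) (adj2 D))"
    using norm3[of K12 K21] RK K11 K22 sq c2 by blast
  define A where "A = mmul (mmul P C) D"
  define B where "B = mmul (adj2 D) (adj2 C)"
  have dA: "det2 A = 1" using dP dC dD by (simp add: A_def det2_mmul)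
  have dB: "det2 B = 1" using dD dC by (simp add: B_def det2_mmul det2_adj2)
  have gback: "GG = mmul (mmul A MM) B" if hyp: "mmul (mmul (adj2 C) (mmul (adj2 P) GG)) C = mmul (mmul D MM) (adj2 D)" for GG MM
  proof -
    have "GG = mmul P (mmul (adj2 P) GG)" using adj_mul(2)[OF dP] by (simp add: mmul_I2 flip: mmul_assoc)
    also have "mmul (adj2 P) GG = mmul (mmul C (mmul (mmul (adj2 C) (mmul (adj2 P) GG)) C)) (adj2 C)"
      using conj_back[OF dC] by simp
    finally have "GG = mmul P (mmul (mmul C (mmul (mmul D MM) (adj2 D))) (adj2 C))" using hyp by simp
    then show ?thesis by (simp add: A_def B_def mmul_assoc)
  qed
  have g11: "G11 = mmul (mmul A E11) B" using gback[of G11 E11] K11 D11 by (simp add: K11_def H11_def)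
  have g22: "G22 = mmul (mmul A E22) B" using gback[of G22 E22] K22 D22 by (simp add: K22_def H22_def)
  show ?thesis
  proof (cases "K12 = mmul (mmul D E12) (adj2 D) \<and> K21 = mmul (mmul D E21) (adj2 D)")
    case True
    then have "G12 = mmul (mmul A E12) B" "G21 = mmul (mmul A E21) B"
      using gback[of G12 E12] gback[of G21 E21] by (simp_all add: K12_def H12_def K21_def H21_def)
    then show ?thesis using dA dB g11 g22 by blast
  next
    case False
    then have "K12 = mmul (mmul D E21) (adj2 D) \<and> K21 = mmul (mmul D E12) (adj2 D)" using Dc by blast
    then have "G12 = mmul (mmul A E21) B" "G21 = mmul (mmul A E12) B"
      using gback[of G12 E21] gback[of G21 E12] by (simp_all add: K12_def H12_def K21_def H21_def)
    then show ?thesis using dA dB g11 g22 by blast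
  qed
qed

definition mat :: "'a::field k10 \<Rightarrow> 'a m2" where
  "mat v = (v (Ten X X), v (Ten X Y), v (Ten Y X), v (Ten Y Y))"

definition vecof :: "'a::field m2 \<Rightarrow> 'a k10" where
  "vecof M = (\<lambda>k. case k of Ten p q \<Rightarrow> (if p \<noteq> E \<and> q \<noteq> E then ent M p q else 0) | Unit \<Rightarrow> 0)"

lemma bV_mat: "bV u w = bf (mat u) (mat w)"
  by (simp add: bV_def mat_def algebra_simps)

lemma vec_from_mat:
  assumes "w \<in> Vspace" "mat w = M" shows "w = vecof M"
  using assms by (intro eq10) (auto simp: Vspace_iff mat_def vecof_def)

lemma mat_bv: "mat (basisvec (Ten X X)) = E11" "mat (basisvec (Ten X Y)) = E12"
  "mat (basisvec (Ten Y X)) = E21" "mat (basisvec (Ten Y Y)) = E22"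
  by (simp_all add: mat_def basisvec_def E11_def E12_def E21_def E22_def)

lemma bv_V: "s \<noteq> E \<Longrightarrow> t \<noteq> E \<Longrightarrow> basisvec (Ten s t) \<in> Vspace"
  by (simp add: Vspace_iff basisvec_def)

lemma V_add: "u \<in> Vspace \<Longrightarrow> w \<in> Vspace \<Longrightarrow> k10add u w \<in> Vspace"
  by (simp add: Vspace_iff k10add_def)

lemma V_smul: "u \<in> Vspace \<Longrightarrow> k10smul c u \<in> Vspace"
  by (simp add: Vspace_iff k10smul_def)

lemma V_decomp:
  assumes "v \<in> Vspace"
  shows "v = k10add (k10add (k10smul (v (Ten X X)) (basisvec (Ten X X))) (k10smul (v (Ten X Y)) (basisvec (Ten X Y))))
                    (k10add (k10smul (v (Ten Y X)) (basisvec (Ten Y X))) (k10smul (v (Ten Y Y)) (basisvec (Ten Y Y))))"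
  using assms by (intro eq10) (simp_all add: Vspace_iff k10add_def k10smul_def basisvec_def)

lemma agree_on_V:
  assumes A: "\<phi> \<in> AutK10" and g: "g \<in> OVb"
    and b: "\<And>s t. s \<noteq> E \<Longrightarrow> t \<noteq> E \<Longrightarrow> \<phi> (basisvec (Ten s t)) = g (basisvec (Ten s t))"
  shows "\<forall>v\<in>Vspace. \<phi> v = g v"
proof
  fix v :: "'a::field k10" assume v: "v \<in> Vspace"
  note P = Aut_props[OF A]
  have gadd: "\<And>u w. u \<in> Vspace \<Longrightarrow> w \<in> Vspace \<Longrightarrow> g (k10add u w) = k10add (g u) (g w)"
    and gsm: "\<And>c u. u \<in> Vspace \<Longrightarrow> g (k10smul c u) = k10smul c (g u)"
    using g by (auto simp: OVb_def)
  define bXX where "bXX = (basisvec (Ten X X) :: 'a k10)"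
  define bXY where "bXY = (basisvec (Ten X Y) :: 'a k10)"
  define bYX where "bYX = (basisvec (Ten Y X) :: 'a k10)"
  define bYY where "bYY = (basisvec (Ten Y Y) :: 'a k10)"
  have inV: "bXX \<in> Vspace" "bXY \<in> Vspace" "bYX \<in> Vspace" "bYY \<in> Vspace"
    by (simp_all add: bv_V bXX_def bXY_def bYX_def bYY_def)
  have eq: "\<phi> bXX = g bXX" "\<phi> bXY = g bXY" "\<phi> bYX = g bYX" "\<phi> bYY = g bYY"
    using b by (simp_all add: bXX_def bXY_def bYX_def bYY_def)
  have dv: "v = k10add (k10add (k10smul (v (Ten X X)) bXX) (k10smul (v (Ten X Y)) bXY))
                    (k10add (k10smul (v (Ten Y X)) bYX) (k10smul (v (Ten Y Y)) bYY))"
    using V_decomp[OF v] by (simp add: bXX_def bXY_def bYX_def bYY_def)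
  have "g v = k10add (k10add (k10smul (v (Ten X X)) (g bXX)) (k10smul (v (Ten X Y)) (g bXY)))
                    (k10add (k10smul (v (Ten Y X)) (g bYX)) (k10smul (v (Ten Y Y)) (g bYY)))"
    by (subst dv) (simp add: gadd gsm V_add V_smul inV)
  moreover have "\<phi> v = k10add (k10add (k10smul (v (Ten X X)) (\<phi> bXX)) (k10smul (v (Ten X Y)) (\<phi> bXY)))
                    (k10add (k10smul (v (Ten Y X)) (\<phi> bYX)) (k10smul (v (Ten Y Y)) (\<phi> bYY)))"
    by (subst dv) (simp add: P(1,2))
  ultimately show "\<phi> v = g v" using eq by simp
qed

fun mneg :: "'a::comm_ring_1 m2 \<Rightarrow> 'a m2" where
  "mneg (a,b,c,d) = (-a,-b,-c,-d)"

lemma det2_trn: "det2 (trn A) = det2 A" by (cases A) (simp add: algebra_simps)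
lemma det2_mneg: "det2 (mneg A) = det2 A" by (cases A) (simp add: algebra_simps)

lemma lift_basis1:
  fixes A B :: "'a::field m2"
  shows "PhiT (kmat (trn A)) (kmat B) (Ten X X) = vecof (mmul (mmul A E11) B)"
    "PhiT (kmat (trn A)) (kmat B) (Ten X Y) = vecof (mmul (mmul A E12) B)"
    "PhiT (kmat (trn A)) (kmat B) (Ten Y X) = vecof (mmul (mmul A E21) B)"
    "PhiT (kmat (trn A)) (kmat B) (Ten Y Y) = vecof (mmul (mmul A E22) B)"
proof -
  obtain a1 a2 a3 a4 where Aa: "A = (a1,a2,a3,a4)" by (cases A) auto
  obtain b1 b2 b3 b4 where Bb: "B = (b1,b2,b3,b4)" by (cases B) auto
  show "PhiT (kmat (trn A)) (kmat B) (Ten X X) = vecof (mmul (mmul A E11) B)"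
    "PhiT (kmat (trn A)) (kmat B) (Ten X Y) = vecof (mmul (mmul A E12) B)"
    "PhiT (kmat (trn A)) (kmat B) (Ten Y X) = vecof (mmul (mmul A E21) B)"
    "PhiT (kmat (trn A)) (kmat B) (Ten Y Y) = vecof (mmul (mmul A E22) B)"
    by (rule eq10; simp add: PhiT_def kmat_def vecof_def Aa Bb E11_def E12_def E21_def E22_def)+
qed

lemma lift_basis2:
  fixes A B :: "'a::field m2"
  shows "(\<lambda>k. - PhiT (kmat (trn (mneg A))) (kmat B) (Ten X X) k) = vecof (mmul (mmul A E11) B)"
    "(\<lambda>k. - PhiT (kmat (trn (mneg A))) (kmat B) (Ten Y X) k) = vecof (mmul (mmul A E21) B)"
    "(\<lambda>k. - PhiT (kmat (trn (mneg A))) (kmat B) (Ten X Y) k) = vecof (mmul (mmul A E12) B)"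
    "(\<lambda>k. - PhiT (kmat (trn (mneg A))) (kmat B) (Ten Y Y) k) = vecof (mmul (mmul A E22) B)"
proof -
  obtain a1 a2 a3 a4 where Aa: "A = (a1,a2,a3,a4)" by (cases A) auto
  obtain b1 b2 b3 b4 where Bb: "B = (b1,b2,b3,b4)" by (cases B) auto
  show "(\<lambda>k. - PhiT (kmat (trn (mneg A))) (kmat B) (Ten X X) k) = vecof (mmul (mmul A E11) B)"
    "(\<lambda>k. - PhiT (kmat (trn (mneg A))) (kmat B) (Ten Y X) k) = vecof (mmul (mmul A E21) B)"
    "(\<lambda>k. - PhiT (kmat (trn (mneg A))) (kmat B) (Ten X Y) k) = vecof (mmul (mmul A E12) B)"
    "(\<lambda>k. - PhiT (kmat (trn (mneg A))) (kmat B) (Ten Y Y) k) = vecof (mmul (mmul A E22) B)"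
    by (rule eq10; simp add: PhiT_def kmat_def vecof_def Aa Bb E11_def E12_def E21_def E22_def)+
qed

lemma linmap_scaled_bv: "linmap Phi (\<lambda>k. c * basisvec j k) = (\<lambda>k. c * Phi j k)"
proof -
  have "(\<lambda>k. c * basisvec j k) = k10smul c (basisvec j)" by (simp add: k10smul_def)
  then have "linmap Phi (\<lambda>k. c * basisvec j k) = k10smul c (linmap Phi (basisvec j))" by (simp add: linmap_smul)
  then show ?thesis by (simp add: linmap_bv k10smul_def)
qed

lemma surj_part:
  fixes g :: "'a::field k10 \<Rightarrow> 'a k10"
  assumes g: "g \<in> OVb" and c2: "(2::'a) \<noteq> 0" and sq: "\<forall>a::'a. \<exists>b. b ^ 2 = a"
  shows "\<exists>\<phi>\<in>AutK10. \<forall>v\<in>Vspace. \<phi> v = g v"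
proof -
  have gV: "g u \<in> Vspace" if "u \<in> Vspace" for u
    using g that by (auto simp: OVb_def bij_betw_def)
  have iso: "bV (g u) (g w) = bV u w" if "u \<in> Vspace" "w \<in> Vspace" for u w
    using g that by (auto simp: OVb_def)
  define G11 where "G11 = mat (g (basisvec (Ten X X)))"
  define G12 where "G12 = mat (g (basisvec (Ten X Y)))"
  define G21 where "G21 = mat (g (basisvec (Ten Y X)))"
  define G22 where "G22 = mat (g (basisvec (Ten Y Y)))"
  have bfG: "bf (mat (g (basisvec (Ten s t)))) (mat (g (basisvec (Ten s' t')))) = bf (mat (basisvec (Ten s t))) (mat (basisvec (Ten s' t')))"
    if "s \<noteq> E" "t \<noteq> E" "s' \<noteq> E" "t' \<noteq> E" for s t s' t'
    using iso[OF bv_V[OF that(1,2)] bv_V[OF that(3,4)]] by (simp add: bV_mat)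
  have R: "Rel G11 G12 G21 G22"
    unfolding Rel_def G11_def G12_def G21_def G22_def
    by (simp add: bfG mat_bv, simp add: E11_def E12_def E21_def E22_def)
  obtain A B where dA: "det2 A = 1" and dB: "det2 B = 1" and
    cs: "(G11 = mmul (mmul A E11) B \<and> G12 = mmul (mmul A E12) B \<and> G21 = mmul (mmul A E21) B \<and> G22 = mmul (mmul A E22) B) \<or>
     (G11 = mmul (mmul A E11) B \<and> G12 = mmul (mmul A E21) B \<and> G21 = mmul (mmul A E12) B \<and> G22 = mmul (mmul A E22) B)"
    using classify[OF R sq c2] by blast
  have gb: "g (basisvec (Ten s t)) = vecof (mat (g (basisvec (Ten s t))))" if "s \<noteq> E" "t \<noteq> E" for s t
    using vec_from_mat[OF gV[OF bv_V[OF that]]] by simp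
  have gb11: "g (basisvec (Ten X X)) = vecof G11" using gb[of X X] by (simp add: G11_def)
  have gb12: "g (basisvec (Ten X Y)) = vecof G12" using gb[of X Y] by (simp add: G12_def)
  have gb21: "g (basisvec (Ten Y X)) = vecof G21" using gb[of Y X] by (simp add: G21_def)
  have gb22: "g (basisvec (Ten Y Y)) = vecof G22" using gb[of Y Y] by (simp add: G22_def)
  have allst: "P X X \<Longrightarrow> P X Y \<Longrightarrow> P Y X \<Longrightarrow> P Y Y \<Longrightarrow> s \<noteq> E \<Longrightarrow> t \<noteq> E \<Longrightarrow> P s t" for P s t
    by (cases s; cases t) auto
  show ?thesis
  proof (cases "G11 = mmul (mmul A E11) B \<and> G12 = mmul (mmul A E12) B \<and> G21 = mmul (mmul A E21) B \<and> G22 = mmul (mmul A E22) B")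
    case True
    define \<phi> where "\<phi> = linmap (PhiT (kmat (trn A)) (kmat B))"
    have A\<phi>: "\<phi> \<in> AutK10" unfolding \<phi>_def by (rule Lift_Aut) (simp_all add: det2_trn dA dB)
    have "\<phi> (basisvec (Ten s t)) = g (basisvec (Ten s t))" if "s \<noteq> E" "t \<noteq> E" for s t
      using that apply (rule allst[where P="\<lambda>s t. \<phi> (basisvec (Ten s t)) = g (basisvec (Ten s t))", rotated 4])
      using True gb11 gb12 gb21 gb22 by (simp_all add: \<phi>_def linmap_bv lift_basis1)
    then show ?thesis using agree_on_V[OF A\<phi> g] A\<phi> by blast
  next
    case False
    then have F: "G11 = mmul (mmul A E11) B \<and> G12 = mmul (mmul A E21) B \<and> G21 = mmul (mmul A E12) B \<and> G22 = mmul (mmul A E22) B"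
      using cs by blast
    define \<phi> where "\<phi> = linmap (PhiT (kmat (trn (mneg A))) (kmat B)) \<circ> linmap Phisw"
    have A\<phi>: "\<phi> \<in> AutK10" unfolding \<phi>_def
      by (rule Aut_comp[OF Lift_Aut Phisw_Aut]) (simp_all add: det2_trn det2_mneg dA dB)
    have sw: "\<phi> (basisvec (Ten s t)) = (\<lambda>k. - PhiT (kmat (trn (mneg A))) (kmat B) (Ten t s) k)" if "s \<noteq> E" "t \<noteq> E" for s t
    proof -
      have "\<phi> (basisvec (Ten s t)) = linmap (PhiT (kmat (trn (mneg A))) (kmat B)) (\<lambda>k. sgab s t * basisvec (Ten t s) k)"
        by (simp add: \<phi>_def linmap_bv Phisw_def)
      also have "\<dots> = (\<lambda>k. sgab s t * PhiT (kmat (trn (mneg A))) (kmat B) (Ten t s) k)"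
        by (rule linmap_scaled_bv)
      finally show ?thesis using that by (simp add: sgab_def k3odd_def)
    qed
    have "\<phi> (basisvec (Ten s t)) = g (basisvec (Ten s t))" if "s \<noteq> E" "t \<noteq> E" for s t
      using that apply (rule allst[where P="\<lambda>s t. \<phi> (basisvec (Ten s t)) = g (basisvec (Ten s t))", rotated 4])
      using F gb11 gb12 gb21 gb22 by (simp_all add: sw lift_basis2)
    then show ?thesis using agree_on_V[OF A\<phi> g] A\<phi> by blast
  qed
qed

lemma tau_fixV: "v \<in> Vspace \<Longrightarrow> tauK10 v = v"
proof
  fix i assume v: "v \<in> Vspace"
  show "tauK10 v i = v i"
  proof (cases "k10odd i")
    case True
    then have "i \<notin> Vb" by (auto simp: Vb_def k10odd_def)
    then have "v i = 0" using v by (simp add: Vspace_def)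
    then show ?thesis by (simp add: tauK10_def)
  next
    case False then show ?thesis by (simp add: tauK10_def)
  qed
qed

theorem lemma3p2:
  assumes char2: "(2::'a::field) \<noteq> 0"
      and char3: "(3::'a) \<noteq> 0"
      and squares: "\<forall>a::'a. \<exists>b. b ^ 2 = a"
  shows "(\<forall>\<phi>\<in>(AutK10 :: ('a k10 \<Rightarrow> 'a k10) set). \<phi> \<in> OVb)
       \<and> (\<forall>g\<in>(OVb :: ('a k10 \<Rightarrow> 'a k10) set). \<exists>\<phi>\<in>AutK10. \<forall>v\<in>Vspace. \<phi> v = g v)
       \<and> {\<phi>\<in>(AutK10 :: ('a k10 \<Rightarrow> 'a k10) set). \<forall>v\<in>Vspace. \<phi> v = v} = {id, tauK10}"
proof (intro conjI)
  show "\<forall>\<phi>\<in>(AutK10 :: ('a k10 \<Rightarrow> 'a k10) set). \<phi> \<in> OVb"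
    using Aut_OVb[OF _ char2] by blast
  show "\<forall>g\<in>(OVb :: ('a k10 \<Rightarrow> 'a k10) set). \<exists>\<phi>\<in>AutK10. \<forall>v\<in>Vspace. \<phi> v = g v"
    using surj_part[OF _ char2 squares] by blast
  show "{\<phi>\<in>(AutK10 :: ('a k10 \<Rightarrow> 'a k10) set). \<forall>v\<in>Vspace. \<phi> v = v} = {id, tauK10}"
  proof
    show "{\<phi>\<in>(AutK10 :: ('a k10 \<Rightarrow> 'a k10) set). \<forall>v\<in>Vspace. \<phi> v = v} \<subseteq> {id, tauK10}"
      using kernel[OF _ char2] by blast
    show "{id, tauK10} \<subseteq> {\<phi>\<in>(AutK10 :: ('a k10 \<Rightarrow> 'a k10) set). \<forall>v\<in>Vspace. \<phi> v = v}"
      using id_Aut tau_Aut tau_fixV by auto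
  qed
qed

end
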